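(* For every $i\in\{2,\dots,k+1\}$, the volumes $|D''_i(y'')|$ and $|D_i(y)|$ do not depend on $y\in C_{i-1}$; denoting them $|D''_i|$ and $|D_i|$, $$\lim_{d\to+\infty}\frac1d\ln\frac{|D''_i|}{v_{d-2}}=\lim_{d\to+\infty}\frac1d\ln\frac{|D_i|}{v_d}=\ln\big(r_i\sqrt{1-a_i^2}\big).$$
   Context: Fix $\rho>1$, an integer $k\ge1$, $\kappa\in(\kappa^c_\rho(k),1)$, and $(a_i)_{2\le i\le k+1}\in(0,1)^k$ satisfying $1<\kappa^{k+1}\frac{(1+\rho)^2}{4\rho}\sqrt{\prod_{2\le j\le k+1}(1-a_j^2)}<\kappa\frac{d_{k+1}}{2\rho}$, where $r_1=r_{k+1}=1+\rho$, $r_i=2$ for $2\le i\le k$, $d_1=1+\rho$, $d_i^2=d_{i-1}^2+2r_ia_id_{i-1}+r_i^2$ ($d_i>0$), and $\kappa^c_\rho(k)=\inf_{0\le a_i<1}\max\big((4\rho/((1+\rho)^2\sqrt{\prod_{2\le i\le k+1}(1-a_i^2)}))^{1/(k+1)},\,2\rho/d_{k+1}\big)$. For $d\ge3$ let $v_m$ be the volume of the unit ball of $\mathbb{R}^m$, $|\cdot|$ Lebesgue measure, $B''(c,r)$ the open ball of $\mathbb{R}^{d-2}$, and write $x=(x',x'')\in\mathbb{R}^2\times\mathbb{R}^{d-2}$. Set $D'_0=(-d^{-1/2},d^{-1/2})\times(-d^{-1/2},0)$, $D'_i=(0,d^{-1/2})^2$ for $i\ge1$; $C''_0=\{0\}$,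 $C''_i=B''(0,d_i-2d^{-1})\setminus B''(0,d_i-3d^{-1})$ for $i\ge1$; $C_i=D'_i\times C''_i$. For $2\le i\le k+1$ and $d$ large, $\theta_i\in(0,\pi/2)$ is given by $\cos\theta_i=\frac{d_{i-1}+a_ir_i}{d_i}+d^{-1/2}$; for $y\in C_{i-1}$, $D''_i(y'')=\{z''\in C''_i:\langle z'',y''\rangle\ge\|y''\|\|z''\|\cos\theta_i\}$ and $D_i(y)=D'_i\times D''_i(y'')$. *)

theory Defs
  imports "HOL-Analysis.Analysis"
begin

definition rr :: "real \<Rightarrow> nat \<Rightarrow> nat \<Rightarrow> real" where
  "rr \<rho> k i = (if i = 1 \<or> i = k + 1 then 1 + \<rho> else 2)"

text \<open>Distances d_i: d_1 = 1 + rho, d_i = sqrt(d_{i-1}^2 + 2 r_i a_i d_{i-1} + r_i^2).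
  (The value at index 0 is unused.)\<close>
fun dd :: "real \<Rightarrow> nat \<Rightarrow> (nat \<Rightarrow> real) \<Rightarrow> nat \<Rightarrow> real" where
  "dd \<rho> k a 0 = 0"
| "dd \<rho> k a (Suc 0) = 1 + \<rho>"
| "dd \<rho> k a (Suc (Suc n)) =
     (let p = dd \<rho> k a (Suc n); i = Suc (Suc n)
      in sqrt (p\<^sup>2 + 2 * rr \<rho> k i * a i * p + (rr \<rho> k i)\<^sup>2))"

definition kappa_c :: "real \<Rightarrow> nat \<Rightarrow> real" where
  "kappa_c \<rho> k =
     (INF a \<in> {a. \<forall>i\<in>{2..k+1}. 0 \<le> a i \<and> a i < 1}.
        max (root (k + 1) (4 * \<rho> / ((1 + \<rho>)\<^sup>2 * sqrt (\<Prod>i\<in>{2..k+1}. 1 - (a i)\<^sup>2))))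
            (2 * \<rho> / dd \<rho> k a (k + 1)))"

definition Rsp :: "nat \<Rightarrow> (nat \<Rightarrow> real) set" where
  "Rsp m = PiE {..<m} (\<lambda>_. UNIV)"

definition lebm :: "nat \<Rightarrow> (nat \<Rightarrow> real) measure" where
  "lebm m = PiM {..<m} (\<lambda>_. lborel)"

definition vol :: "nat \<Rightarrow> (nat \<Rightarrow> real) set \<Rightarrow> real" where
  "vol m S = measure (lebm m) S"

definition enorm :: "nat \<Rightarrow> (nat \<Rightarrow> real) \<Rightarrow> real" where
  "enorm m x = sqrt (\<Sum>j<m. (x j)\<^sup>2)"

definition einner :: "nat \<Rightarrow> (nat \<Rightarrow> real) \<Rightarrow> (nat \<Rightarrow> real) \<Rightarrow> real" where
  "einner m x y = (\<Sum>j<m. x j * y j)"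

definition oball0 :: "nat \<Rightarrow> real \<Rightarrow> (nat \<Rightarrow> real) set" where
  "oball0 m r = {x \<in> Rsp m. enorm m x < r}"

definition vball :: "nat \<Rightarrow> real" where
  "vball m = vol m (oball0 m 1)"

definition xp :: "(nat \<Rightarrow> real) \<Rightarrow> real \<times> real" where
  "xp x = (x 0, x 1)"

definition xpp :: "nat \<Rightarrow> (nat \<Rightarrow> real) \<Rightarrow> (nat \<Rightarrow> real)" where
  "xpp n x = restrict (\<lambda>j. x (j + 2)) {..<n - 2}"

definition Dp :: "nat \<Rightarrow> nat \<Rightarrow> (real \<times> real) set" where
  "Dp n i = (if i = 0
     then {- 1 / sqrt (real n) <..< 1 / sqrt (real n)} \<times> {- 1 / sqrt (real n) <..< 0}
     else {0 <..< 1 / sqrt (real n)} \<times> {0 <..< 1 / sqrt (real n)})"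

definition Cpp :: "real \<Rightarrow> nat \<Rightarrow> (nat \<Rightarrow> real) \<Rightarrow> nat \<Rightarrow> nat \<Rightarrow> (nat \<Rightarrow> real) set" where
  "Cpp \<rho> k a n i = (if i = 0 then {restrict (\<lambda>_. 0) {..<n - 2}}
     else oball0 (n - 2) (dd \<rho> k a i - 2 / real n) - oball0 (n - 2) (dd \<rho> k a i - 3 / real n))"

definition CC :: "real \<Rightarrow> nat \<Rightarrow> (nat \<Rightarrow> real) \<Rightarrow> nat \<Rightarrow> nat \<Rightarrow> (nat \<Rightarrow> real) set" where
  "CC \<rho> k a n i = {x \<in> Rsp n. xp x \<in> Dp n i \<and> xpp n x \<in> Cpp \<rho> k a n i}"

definition costh :: "real \<Rightarrow> nat \<Rightarrow> (nat \<Rightarrow> real) \<Rightarrow> nat \<Rightarrow> nat \<Rightarrow> real" where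
  "costh \<rho> k a n i = (dd \<rho> k a (i - 1) + a i * rr \<rho> k i) / dd \<rho> k a i + 1 / sqrt (real n)"

definition Dpp :: "real \<Rightarrow> nat \<Rightarrow> (nat \<Rightarrow> real) \<Rightarrow> nat \<Rightarrow> nat \<Rightarrow> (nat \<Rightarrow> real) \<Rightarrow> (nat \<Rightarrow> real) set" where
  "Dpp \<rho> k a n i ypp = {z \<in> Cpp \<rho> k a n i.
      einner (n - 2) z ypp \<ge> enorm (n - 2) ypp * enorm (n - 2) z * costh \<rho> k a n i}"

definition DD :: "real \<Rightarrow> nat \<Rightarrow> (nat \<Rightarrow> real) \<Rightarrow> nat \<Rightarrow> nat \<Rightarrow> (nat \<Rightarrow> real) \<Rightarrow> (nat \<Rightarrow> real) set" where
  "DD \<rho> k a n i y = {x \<in> Rsp n. xp x \<in> Dp n i \<and> xpp n x \<in> Dpp \<rho> k a n i (xpp n y)}"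

end

theory Submission
  imports Defs
begin


abbreviation LM :: "nat set \<Rightarrow> (nat \<Rightarrow> real) measure" where
  "LM A \<equiv> PiM A (\<lambda>_. lborel)"

lemma upd_meas:
  assumes "a \<in> A" and [measurable]: "g \<in> borel_measurable (LM A)"
  shows "(\<lambda>z. z(a := g z)) \<in> LM A \<rightarrow>\<^sub>M LM A"
proof -
  have e: "(\<lambda>z. z(a := g z)) = (\<lambda>z i. (\<lambda>i z. if i = a then g z else z i) i z)"
    by (auto simp: fun_eq_iff)
  show ?thesis unfolding e
    by (rule measurable_PiM_single') (use assms in \<open>auto simp: space_PiM PiE_def extensional_def\<close>)
qed

lemma shear_meas[measurable]:
  assumes "a \<in> A" "b \<in> A"
  shows "(\<lambda>z. z(a := z a + t * z b)) \<in> LM A \<rightarrow>\<^sub>M LM A"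
  by (rule upd_meas) (use assms in measurable)

lemma refl_meas[measurable]:
  assumes "a \<in> A"
  shows "(\<lambda>z. z(a := - z a)) \<in> LM A \<rightarrow>\<^sub>M LM A"
  by (rule upd_meas) (use assms in measurable)

lemma shear_nn:
  assumes A: "finite A" "a \<in> A" "b \<in> A" "a \<noteq> b"
    and f[measurable]: "f \<in> borel_measurable (LM A)"
  shows "(\<integral>\<^sup>+ z. f (z(a := z a + t * z b)) \<partial>LM A) = (\<integral>\<^sup>+ z. f z \<partial>LM A)"
proof -
  interpret product_sigma_finite "\<lambda>_. lborel" by standard
  define J where "J = A - {a}"
  have AJ: "A = insert a J" "a \<notin> J" "finite J" "b \<in> J" using A by (auto simp: J_def)
  have m2: "(\<lambda>z. f (z(a := z a + t * z b))) \<in> borel_measurable (LM A)"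
    using A by (intro measurable_compose[OF shear_meas f]) auto
  have "(\<integral>\<^sup>+ z. f (z(a := z a + t * z b)) \<partial>LM A)
      = (\<integral>\<^sup>+ x. (\<integral>\<^sup>+ y. f ((x(a := y))(a := y + t * x b)) \<partial>lborel) \<partial>LM J)"
    using m2 unfolding AJ(1)
    apply (subst product_nn_integral_insert[OF AJ(3) AJ(2)])
    using AJ by (auto intro!: nn_integral_cong)
  also have "\<dots> = (\<integral>\<^sup>+ x. (\<integral>\<^sup>+ y. f (x(a := y)) \<partial>lborel) \<partial>LM J)"
  proof (rule nn_integral_cong)
    fix x assume x: "x \<in> space (LM J)"
    have hm: "(\<lambda>y. f (x(a := y))) \<in> borel_measurable borel"
      using measurable_comp[OF measurable_component_update f[unfolded AJ(1)], OF x AJ(2)]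
      unfolding comp_def by simp
    show "(\<integral>\<^sup>+ y. f ((x(a := y))(a := y + t * x b)) \<partial>lborel) = (\<integral>\<^sup>+ y. f (x(a := y)) \<partial>lborel)"
      using nn_integral_real_affine[OF hm, of 1 "t * x b"] by (simp add: add.commute)
  qed
  also have "\<dots> = (\<integral>\<^sup>+ z. f z \<partial>LM A)"
    unfolding AJ(1) by (rule product_nn_integral_insert[symmetric, OF AJ(3) AJ(2)]) (use f AJ in simp)
  finally show ?thesis .
qed

lemma refl_nn:
  assumes A: "finite A" "a \<in> A"
    and f[measurable]: "f \<in> borel_measurable (LM A)"
  shows "(\<integral>\<^sup>+ z. f (z(a := - z a)) \<partial>LM A) = (\<integral>\<^sup>+ z. f z \<partial>LM A)"
proof -
  interpret product_sigma_finite "\<lambda>_. lborel" by standard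
  define J where "J = A - {a}"
  have AJ: "A = insert a J" "a \<notin> J" "finite J" using A by (auto simp: J_def)
  have m2: "(\<lambda>z. f (z(a := - z a))) \<in> borel_measurable (LM A)"
    using A by (intro measurable_compose[OF refl_meas f]) auto
  have "(\<integral>\<^sup>+ z. f (z(a := - z a)) \<partial>LM A)
      = (\<integral>\<^sup>+ x. (\<integral>\<^sup>+ y. f ((x(a := y))(a := - y)) \<partial>lborel) \<partial>LM J)"
    using m2 unfolding AJ(1)
    apply (subst product_nn_integral_insert[OF AJ(3) AJ(2)])
    using AJ by (auto intro!: nn_integral_cong)
  also have "\<dots> = (\<integral>\<^sup>+ x. (\<integral>\<^sup>+ y. f (x(a := y)) \<partial>lborel) \<partial>LM J)"
  proof (rule nn_integral_cong)
    fix x assume x: "x \<in> space (LM J)"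
    have hm: "(\<lambda>y. f (x(a := y))) \<in> borel_measurable borel"
      using measurable_comp[OF measurable_component_update f[unfolded AJ(1)], OF x AJ(2)]
      unfolding comp_def by simp
    show "(\<integral>\<^sup>+ y. f ((x(a := y))(a := - y)) \<partial>lborel) = (\<integral>\<^sup>+ y. f (x(a := y)) \<partial>lborel)"
      using nn_integral_real_affine[OF hm, of "-1" 0] by simp
  qed
  also have "\<dots> = (\<integral>\<^sup>+ z. f z \<partial>LM A)"
    unfolding AJ(1) by (rule product_nn_integral_insert[symmetric, OF AJ(3) AJ(2)]) (use f AJ in simp)
  finally show ?thesis .
qed


definition rot :: "nat \<Rightarrow> nat \<Rightarrow> real \<Rightarrow> real \<Rightarrow> (nat \<Rightarrow> real) \<Rightarrow> (nat \<Rightarrow> real)" where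
  "rot a b c s z = z(a := c * z a + s * z b, b := - s * z a + c * z b)"

lemma rot_nn:
  assumes A: "finite A" "a \<in> A" "b \<in> A" "a \<noteq> b" and cs: "c\<^sup>2 + s\<^sup>2 = 1"
    and f[measurable]: "f \<in> borel_measurable (LM A)"
  shows "(\<integral>\<^sup>+ z. f (rot a b c s z) \<partial>LM A) = (\<integral>\<^sup>+ z. f z \<partial>LM A)"
proof (cases "c = -1")
  case True
  then have s: "s = 0" using cs by (simp add: power2_eq_square)
  have e: "rot a b c s z = (\<lambda>z. z(a := - z a)) ((\<lambda>z. z(b := - z b)) z)" for z
    using True s A by (auto simp: rot_def fun_eq_iff)
  have m1: "(\<lambda>z. f (z(a := - z a))) \<in> borel_measurable (LM A)"
    using A by (intro measurable_compose[OF refl_meas f]) auto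
  show ?thesis unfolding e
    using refl_nn[OF A(1,3) m1] refl_nn[OF A(1,2) f] by simp
next
  case False
  then have c1: "1 + c \<noteq> 0" by linarith
  define p where "p = s / (1 + c)"
  define q where "q = - s"
  let ?U = "\<lambda>z. z(a := z a + p * z b)"
  let ?L = "\<lambda>z. z(b := z b + q * z a)"
  have pq: "1 + p * q = c" "p * (1 + p * q) + p = s"
  proof -
    have "s\<^sup>2 = (1 - c) * (1 + c)" using cs by (simp add: algebra_simps power2_eq_square)
    then show "1 + p * q = c" using c1 unfolding p_def q_def
      by (simp add: field_simps power2_eq_square)
    then have "p * (1 + p * q) + p = p * (1 + c)" by (simp add: algebra_simps)
    then show "p * (1 + p * q) + p = s" using c1 unfolding p_def by simp
  qed
  have e: "rot a b c s z = ?U (?L (?U z))" for z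
  proof -
    have "c * z a + s * z b = (z a + p * z b) + p * (z b + q * (z a + p * z b))"
    proof -
      have "(z a + p * z b) + p * (z b + q * (z a + p * z b)) = (1 + p*q) * z a + (p * (1 + p * q) + p) * z b"
        by (simp add: algebra_simps)
      then show ?thesis using pq by simp
    qed
    moreover have "- s * z a + c * z b = z b + q * (z a + p * z b)"
    proof -
      have "z b + q * (z a + p * z b) = - s * z a + (1 + p * q) * z b"
        unfolding q_def by (simp add: algebra_simps)
      then show ?thesis using pq by simp
    qed
    ultimately show ?thesis using A by (auto simp: rot_def fun_eq_iff)
  qed
  have m1: "(\<lambda>z. f (?U z)) \<in> borel_measurable (LM A)"
    using A by (intro measurable_compose[OF shear_meas f]) auto
  have m2: "(\<lambda>z. f (?U (?L z))) \<in> borel_measurable (LM A)"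
    using A by (intro measurable_compose[OF shear_meas m1]) auto
  show ?thesis unfolding e
    using shear_nn[OF A m2, of p] shear_nn[OF A(1,3,2) _ m1, of q] shear_nn[OF A f, of p] A(4) by simp
qed


definition gi :: "nat set \<Rightarrow> (nat \<Rightarrow> real) \<Rightarrow> (nat \<Rightarrow> real) \<Rightarrow> real" where
  "gi A z u = (\<Sum>j\<in>A. z j * u j)"

definition gn :: "nat set \<Rightarrow> (nat \<Rightarrow> real) \<Rightarrow> real" where
  "gn A z = sqrt (gi A z z)"

definition cap :: "nat set \<Rightarrow> real set \<Rightarrow> real \<Rightarrow> (nat \<Rightarrow> real) \<Rightarrow> (nat \<Rightarrow> real) set" where
  "cap A S c u = {z \<in> space (LM A). gn A z \<in> S \<and> gi A z u \<ge> gn A u * gn A z * c}"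

lemma gi_meas[measurable]: "finite A \<Longrightarrow> (\<lambda>z. gi A z u) \<in> borel_measurable (LM A)"
  unfolding gi_def by measurable

lemma gn_meas[measurable]: "finite A \<Longrightarrow> (\<lambda>z. gn A z) \<in> borel_measurable (LM A)"
  unfolding gn_def gi_def by measurable

lemma cap_sets[measurable]:
  assumes "finite A" "S \<in> sets borel"
  shows "cap A S c u \<in> sets (LM A)"
proof -
  have "cap A S c u = {z \<in> space (LM A). gn A z \<in> S \<and> gi A z u \<ge> gn A u * gn A z * c}"
    by (simp add: cap_def)
  also have "\<dots> \<in> sets (LM A)"
  proof -
    have m1: "(\<lambda>z. gn A z) \<in> borel_measurable (LM A)" using assms by simp
    have m2: "(\<lambda>z. gi A z u - gn A u * gn A z * c) \<in> borel_measurable (LM A)"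
      using assms by measurable
    have "{z \<in> space (LM A). gn A z \<in> S \<and> gi A z u \<ge> gn A u * gn A z * c}
        = (gn A -` S \<inter> space (LM A)) \<inter> ((\<lambda>z. gi A z u - gn A u * gn A z * c) -` {0..} \<inter> space (LM A))"
      by auto
    also have "\<dots> \<in> sets (LM A)"
      using measurable_sets[OF m1 assms(2)] measurable_sets[OF m2, of "{0..}"] by auto
    finally show ?thesis .
  qed
  finally show ?thesis .
qed

lemma gi_rot:
  assumes A: "finite A" "a \<in> A" "b \<in> A" "a \<noteq> b" and cs: "c\<^sup>2 + s\<^sup>2 = 1"
  shows "gi A (rot a b c s z) (rot a b c s u) = gi A z u"
proof -
  let ?R = "A - {a} - {b}"
  have "gi A (rot a b c s z) (rot a b c s u) = (c * z a + s * z b) * (c * u a + s * u b)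
      + (- s * z a + c * z b) * (- s * u a + c * u b) + (\<Sum>j\<in>?R. z j * u j)"
    unfolding gi_def using A
    by (simp add: sum.remove[of A a] sum.remove[of "A - {a}" b] rot_def)
  also have "\<dots> = (c\<^sup>2 + s\<^sup>2) * (z a * u a + z b * u b) + (\<Sum>j\<in>?R. z j * u j)"
    by (simp add: algebra_simps power2_eq_square)
  also have "\<dots> = gi A z u"
    unfolding gi_def using A cs
    by (simp add: sum.remove[of A a] sum.remove[of "A - {a}" b])
  finally show ?thesis .
qed

lemma gi_refl:
  assumes A: "finite A" "a \<in> A"
  shows "gi A (z(a := - z a)) (u(a := - u a)) = gi A z u"
  unfolding gi_def using A
  by (simp add: sum.remove[of A a])

lemma cap_inv_gen:
  assumes A: "finite A" and S: "S \<in> sets borel"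
    and Tm: "T \<in> LM A \<rightarrow>\<^sub>M LM A"
    and Tnn: "\<And>f. f \<in> borel_measurable (LM A) \<Longrightarrow> (\<integral>\<^sup>+ z. f (T z) \<partial>LM A) = (\<integral>\<^sup>+ z. f z \<partial>LM A)"
    and Tgi: "\<And>z w. gi A (T z) (T w) = gi A z w"
  shows "emeasure (LM A) (cap A S c (T u)) = emeasure (LM A) (cap A S c u)"
proof -
  have gn: "gn A (T z) = gn A z" for z using Tgi by (simp add: gn_def)
  have "emeasure (LM A) (cap A S c (T u)) = (\<integral>\<^sup>+ z. indicator (cap A S c (T u)) z \<partial>LM A)"
    using A S by simp
  also have "\<dots> = (\<integral>\<^sup>+ z. indicator (cap A S c (T u)) (T z) \<partial>LM A)"
    using A S by (intro Tnn[symmetric] borel_measurable_indicator cap_sets)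
  also have "\<dots> = (\<integral>\<^sup>+ z. indicator (cap A S c u) z \<partial>LM A)"
  proof (rule nn_integral_cong)
    fix z assume z: "z \<in> space (LM A)"
    then have "T z \<in> space (LM A)" using Tm by (rule measurable_space[rotated])
    then show "indicator (cap A S c (T u)) (T z) = (indicator (cap A S c u) z :: ennreal)"
      using z by (simp add: indicator_def cap_def gn Tgi)
  qed
  also have "\<dots> = emeasure (LM A) (cap A S c u)"
    using A S by simp
  finally show ?thesis .
qed

lemma rot_meas[measurable]:
  assumes "a \<in> A" "b \<in> A" "a \<noteq> b"
  shows "rot a b c s \<in> LM A \<rightarrow>\<^sub>M LM A"
proof -
  have e: "rot a b c s = (\<lambda>z i. (\<lambda>i z. if i = a then c * z a + s * z b else if i = b then - s * z a + c * z b else z i) i z)"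
    using assms by (auto simp: rot_def fun_eq_iff)
  show ?thesis unfolding e
    by (rule measurable_PiM_single') (use assms in \<open>auto simp: space_PiM PiE_def extensional_def\<close>)
qed

lemma cap_rot:
  assumes A: "finite A" "a \<in> A" "b \<in> A" "a \<noteq> b" and cs: "c\<^sup>2 + s\<^sup>2 = 1" and S: "S \<in> sets borel"
  shows "emeasure (LM A) (cap A S c' (rot a b c s u)) = emeasure (LM A) (cap A S c' u)"
  by (rule cap_inv_gen[OF A(1) S rot_meas[OF A(2-4)]])
     (use rot_nn[OF A cs] gi_rot[OF A cs] in auto)

lemma cap_refl:
  assumes A: "finite A" "a \<in> A" and S: "S \<in> sets borel"
  shows "emeasure (LM A) (cap A S c' (u(a := - u a))) = emeasure (LM A) (cap A S c' u)"
  by (rule cap_inv_gen[OF A(1) S refl_meas[OF A(2)]])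
     (use refl_nn[OF A] gi_refl[OF A] in auto)


definition ev :: "nat set \<Rightarrow> nat \<Rightarrow> (nat \<Rightarrow> real)" where
  "ev A j = (\<lambda>i. if i = j then 1 else 0)"

lemma cap_cong: "(\<And>i. i \<in> A \<Longrightarrow> u i = v i) \<Longrightarrow> cap A S cc u = cap A S cc v"
  unfolding cap_def gn_def gi_def by (simp cong: sum.cong)

lemma cap_homog:
  assumes "l > 0"
  shows "cap A S cc (\<lambda>i. l * u i) = cap A S cc u"
proof -
  have gi: "gi A z (\<lambda>i. l * u i) = l * gi A z u" for z
    unfolding gi_def by (simp add: sum_distrib_left algebra_simps)
  have gn: "gn A (\<lambda>i. l * u i) = l * gn A u"
    unfolding gn_def gi_def using assms
    by (simp add: sum_distrib_left[symmetric] algebra_simps real_sqrt_mult power2_eq_square[symmetric])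
  show ?thesis unfolding cap_def gi gn using assms
    by (auto simp: mult.assoc)
qed

lemma cap_reduce:
  assumes A: "finite A" "j0 \<in> A" and S: "S \<in> sets borel" and u: "gn A u > 0"
  shows "emeasure (LM A) (cap A S cc u) = emeasure (LM A) (cap A S cc (ev A j0))"
proof -
  have main: "\<forall>u. card {j \<in> A. j \<noteq> j0 \<and> u j \<noteq> 0} = n \<longrightarrow> gn A u > 0 \<longrightarrow>
     emeasure (LM A) (cap A S cc u) = emeasure (LM A) (cap A S cc (ev A j0))" for n
  proof (induction n)
    case 0
    show ?case
    proof (intro allI impI)
      fix u assume c0: "card {j \<in> A. j \<noteq> j0 \<and> u j \<noteq> 0} = 0" and g: "gn A u > 0"
      have z: "\<And>j. j \<in> A \<Longrightarrow> j \<noteq> j0 \<Longrightarrow> u j = 0" using c0 A by auto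
      have "u j0 \<noteq> 0"
      proof
        assume "u j0 = 0"
        then have "gi A u u = 0" unfolding gi_def using z by (intro sum.neutral) auto
        then show False using g by (simp add: gn_def)
      qed
      have pos: "emeasure (LM A) (cap A S cc v) = emeasure (LM A) (cap A S cc (ev A j0))"
        if v: "\<And>j. j \<in> A \<Longrightarrow> j \<noteq> j0 \<Longrightarrow> v j = 0" "v j0 > 0" for v
      proof -
        have "cap A S cc v = cap A S cc (\<lambda>i. v j0 * ev A j0 i)"
          by (rule cap_cong) (use v in \<open>auto simp: ev_def\<close>)
        also have "\<dots> = cap A S cc (ev A j0)" by (rule cap_homog) (use v in auto)
        finally show ?thesis by simp
      qed
      show "emeasure (LM A) (cap A S cc u) = emeasure (LM A) (cap A S cc (ev A j0))"
      proof (cases "u j0 > 0")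
        case True
        then show ?thesis using pos z by blast
      next
        case False
        then have "(u(j0 := - u j0)) j0 > 0" using \<open>u j0 \<noteq> 0\<close> by simp
        then have "emeasure (LM A) (cap A S cc (u(j0 := - u j0))) = emeasure (LM A) (cap A S cc (ev A j0))"
          using z by (intro pos) auto
        then show ?thesis using cap_refl[OF A S] by simp
      qed
    qed
  next
    case (Suc n)
    show ?case
    proof (intro allI impI)
      fix u assume cS: "card {j \<in> A. j \<noteq> j0 \<and> u j \<noteq> 0} = Suc n" and g: "gn A u > 0"
      then obtain j where j: "j \<in> A" "j \<noteq> j0" "u j \<noteq> 0"
        by (metis (mono_tags, lifting) card.empty empty_Collect_eq nat.distinct(1))
      define r where "r = sqrt ((u j0)\<^sup>2 + (u j)\<^sup>2)"
      have r: "r > 0" using j by (simp add: r_def add_nonneg_pos)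
      have r2: "r\<^sup>2 = (u j0)\<^sup>2 + (u j)\<^sup>2" unfolding r_def by simp
      define c where "c = u j0 / r"
      define s where "s = u j / r"
      have cs: "c\<^sup>2 + s\<^sup>2 = 1" unfolding c_def s_def using r r2 j(3)
        by (simp add: power_divide add_divide_distrib[symmetric] del: r2)
      define u' where "u' = rot j0 j c s u"
      have u'j: "u' j = 0" unfolding u'_def rot_def c_def s_def using j by (simp add: algebra_simps)
      have u'o: "u' i = u i" if "i \<noteq> j0" "i \<noteq> j" for i
        using that unfolding u'_def rot_def by simp
      have setq: "{i \<in> A. i \<noteq> j0 \<and> u' i \<noteq> 0} = {i \<in> A. i \<noteq> j0 \<and> u i \<noteq> 0} - {j}"
        using u'j u'o by (auto; metis)
      have "card {i \<in> A. i \<noteq> j0 \<and> u' i \<noteq> 0} = n"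
        unfolding setq using cS j A(1) by (simp add: card_Diff_singleton)
      moreover have "gn A u' > 0" using g gi_rot[OF A(1) A(2) j(1) j(2)[symmetric] cs]
        by (simp add: gn_def u'_def)
      ultimately have "emeasure (LM A) (cap A S cc u') = emeasure (LM A) (cap A S cc (ev A j0))"
        using Suc.IH by blast
      then show "emeasure (LM A) (cap A S cc u) = emeasure (LM A) (cap A S cc (ev A j0))"
        using cap_rot[OF A(1) A(2) j(1) j(2)[symmetric] cs S] unfolding u'_def by simp
    qed
  qed
  then show ?thesis using u by blast
qed


lemma emeasure_insert_prod:
  assumes J: "finite J" "a \<notin> J" and B: "B \<in> sets borel" and C: "C \<in> sets (LM J)"
  shows "emeasure (LM (insert a J)) {z \<in> space (LM (insert a J)). z a \<in> B \<and> restrict z J \<in> C}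
       = emeasure lborel B * emeasure (LM J) C"
proof -
  interpret product_sigma_finite "\<lambda>_. lborel" by standard
  let ?E = "{z \<in> space (LM (insert a J)). z a \<in> B \<and> restrict z J \<in> C}"
  have r: "(\<lambda>z. restrict z J) \<in> LM (insert a J) \<rightarrow>\<^sub>M LM J"
    by (rule measurable_restrict_subset) auto
  have Em: "?E \<in> sets (LM (insert a J))"
  proof -
    have "?E = ((\<lambda>z. z a) -` B \<inter> space (LM (insert a J))) \<inter> ((\<lambda>z. restrict z J) -` C \<inter> space (LM (insert a J)))"
      by auto
    also have "\<dots> \<in> sets (LM (insert a J))"
      using measurable_sets[OF r C] measurable_sets[OF measurable_component_singleton[of a "insert a J" "\<lambda>_. lborel", OF insertI1], of B] B
      by auto
    finally show ?thesis .
  qed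
  have "emeasure (LM (insert a J)) ?E = (\<integral>\<^sup>+ z. indicator ?E z \<partial>LM (insert a J))"
    using Em by simp
  also have "\<dots> = (\<integral>\<^sup>+ x. (\<integral>\<^sup>+ y. indicator ?E (x(a := y)) \<partial>lborel) \<partial>LM J)"
    by (rule product_nn_integral_insert[OF J]) (use Em in simp)
  also have "\<dots> = (\<integral>\<^sup>+ x. emeasure lborel B * indicator C x \<partial>LM J)"
  proof (rule nn_integral_cong)
    fix x assume x: "x \<in> space (LM J)"
    have "indicator ?E (x(a := y)) = (indicator B y * indicator C x :: ennreal)" for y
    proof -
      have "restrict (x(a := y)) J = x"
        using x J by (auto simp: space_PiM PiE_def extensional_def fun_eq_iff)
      moreover have "x(a := y) \<in> space (LM (insert a J))"
        using x by (auto simp: space_PiM PiE_def extensional_def)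
      ultimately show ?thesis by (auto simp: indicator_def)
    qed
    then have "(\<integral>\<^sup>+ y. indicator ?E (x(a := y)) \<partial>lborel) = (\<integral>\<^sup>+ y. indicator C x * indicator B y \<partial>lborel)"
      by (simp add: mult.commute)
    also have "\<dots> = indicator C x * emeasure lborel B"
      using B by (simp add: nn_integral_cmult)
    finally show "(\<integral>\<^sup>+ y. indicator ?E (x(a := y)) \<partial>lborel) = emeasure lborel B * indicator C x"
      by (simp add: mult.commute)
  qed
  also have "\<dots> = emeasure lborel B * emeasure (LM J) C"
    using C by (simp add: nn_integral_cmult)
  finally show ?thesis .
qed

definition cball_s :: "nat set \<Rightarrow> real \<Rightarrow> (nat \<Rightarrow> real) set" where
  "cball_s A r = {f. sqrt (\<Sum>i\<in>A. (f i)\<^sup>2) \<le> r} \<inter> space (LM A)"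

lemma cball_s_sets[measurable]: "finite A \<Longrightarrow> cball_s A r \<in> sets (LM A)"
proof -
  assume A: "finite A"
  have "cball_s A r = {f \<in> space (LM A). sqrt (\<Sum>i\<in>A. (f i)\<^sup>2) \<le> r}" by (auto simp: cball_s_def)
  also have "\<dots> \<in> sets (LM A)" using A by measurable
  finally show ?thesis .
qed

lemma emeasure_cball_s:
  "finite A \<Longrightarrow> r > 0 \<Longrightarrow> emeasure (LM A) (cball_s A r) = ennreal (unit_ball_vol (real (card A)) * r ^ card A)"
  unfolding cball_s_def by (rule emeasure_cball_aux)

lemma measure_cball_s:
  "finite A \<Longrightarrow> r > 0 \<Longrightarrow> measure (LM A) (cball_s A r) = unit_ball_vol (real (card A)) * r ^ card A"
  by (simp add: measure_def emeasure_cball_s)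

lemma measure_oball_s:
  assumes A: "finite A" and r: "r > 0"
  shows "measure (LM A) {f \<in> space (LM A). gn A f < r} = unit_ball_vol (real (card A)) * r ^ card A"
proof -
  let ?O = "{f \<in> space (LM A). gn A f < r}"
  have gne: "gn A f = sqrt (\<Sum>i\<in>A. (f i)\<^sup>2)" for f by (simp add: gn_def gi_def power2_eq_square)
  have Om: "?O \<in> sets (LM A)" using A by measurable
  have sub: "?O \<subseteq> cball_s A r" by (auto simp: cball_s_def gne)
  have fin: "emeasure (LM A) (cball_s A r) < \<infinity>" using emeasure_cball_s[OF A r] by simp
  have up: "measure (LM A) ?O \<le> unit_ball_vol (real (card A)) * r ^ card A"
    using measure_mono_fmeasurable[OF sub Om] fin A r
    by (simp add: fmeasurable_def measure_cball_s)
  have lo: "unit_ball_vol (real (card A)) * r' ^ card A \<le> measure (LM A) ?O" if r': "0 < r'" "r' < r" for r'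
  proof -
    have "cball_s A r' \<subseteq> ?O" using r' by (auto simp: cball_s_def gne)
    moreover have "?O \<in> fmeasurable (LM A)"
      using Om emeasure_mono[OF sub cball_s_sets[OF A]] fin by (intro fmeasurableI) auto
    ultimately have "measure (LM A) (cball_s A r') \<le> measure (LM A) ?O"
      using A by (intro measure_mono_fmeasurable) auto
    then show ?thesis using measure_cball_s[OF A r'(1)] by simp
  qed
  have "unit_ball_vol (real (card A)) * r ^ card A \<le> measure (LM A) ?O"
  proof (rule tendsto_le[OF trivial_limit_at_left_real])
    show "((\<lambda>r'. unit_ball_vol (real (card A)) * r' ^ card A) \<longlongrightarrow> unit_ball_vol (real (card A)) * r ^ card A) (at_left r)"
      by (intro tendsto_intros)
    show "((\<lambda>_. measure (LM A) ?O) \<longlongrightarrow> measure (LM A) ?O) (at_left r)" by simp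
    have "\<forall>\<^sub>F r' in at_left r. 0 < r' \<and> r' < r"
      using eventually_at_left_real[OF r] by (rule eventually_mono) auto
    then show "\<forall>\<^sub>F r' in at_left r. unit_ball_vol (real (card A)) * r' ^ card A \<le> measure (LM A) ?O"
      by eventually_elim (use lo in auto)
  qed
  with up show ?thesis by linarith
qed


lemma prod_set_sets:
  assumes "B \<in> sets borel" "C \<in> sets (LM J)" "J \<subseteq> A" "a \<in> A"
  shows "{z \<in> space (LM A). z a \<in> B \<and> restrict z J \<in> C} \<in> sets (LM A)"
proof -
  have r: "(\<lambda>z. restrict z J) \<in> LM A \<rightarrow>\<^sub>M LM J"
    by (rule measurable_restrict_subset) (use assms in auto)
  have "{z \<in> space (LM A). z a \<in> B \<and> restrict z J \<in> C} = ((\<lambda>z. z a) -` B \<inter> space (LM A)) \<inter> ((\<lambda>z. restrict z J) -` C \<inter> space (LM A))"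
    by auto
  also have "\<dots> \<in> sets (LM A)"
    using measurable_sets[OF r assms(2)] measurable_sets[OF measurable_component_singleton[of a A "\<lambda>_. lborel", OF assms(4)], of B] assms(1)
    by auto
  finally show ?thesis .
qed

lemma sets_prod2:
  assumes "B0 \<in> sets borel" "B1 \<in> sets borel" "C \<in> sets (LM R)" "R \<subseteq> A" "j0 \<in> A" "j1 \<in> A"
  shows "{z \<in> space (LM A). z j0 \<in> B0 \<and> z j1 \<in> B1 \<and> restrict z R \<in> C} \<in> sets (LM A)"
proof -
  have r: "(\<lambda>z. restrict z R) \<in> LM A \<rightarrow>\<^sub>M LM R"
    by (rule measurable_restrict_subset) (use assms in auto)
  have "{z \<in> space (LM A). z j0 \<in> B0 \<and> z j1 \<in> B1 \<and> restrict z R \<in> C} = ((\<lambda>z. z j0) -` B0 \<inter> space (LM A)) \<inter> ((\<lambda>z. z j1) -` B1 \<inter> space (LM A)) \<inter> ((\<lambda>z. restrict z R) -` C \<inter> space (LM A))"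
    by auto
  also have "\<dots> \<in> sets (LM A)"
    using measurable_sets[OF r assms(3)] measurable_sets[OF measurable_component_singleton[of j0 A "\<lambda>_. lborel", OF assms(5)], of B0]
      measurable_sets[OF measurable_component_singleton[of j1 A "\<lambda>_. lborel", OF assms(6)], of B1] assms(1,2)
    by auto
  finally show ?thesis .
qed

lemma emeasure_prod2:
  assumes A: "finite A" "j0 \<in> A" "j1 \<in> A" "j0 \<noteq> j1"
    and B: "B0 \<in> sets borel" "B1 \<in> sets borel" and C: "C \<in> sets (LM (A - {j0, j1}))"
  shows "emeasure (LM A) {z \<in> space (LM A). z j0 \<in> B0 \<and> z j1 \<in> B1 \<and> restrict z (A - {j0, j1}) \<in> C}
     = emeasure lborel B0 * (emeasure lborel B1 * emeasure (LM (A - {j0, j1})) C)"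
proof -
  define R where "R = A - {j0, j1}"
  define J where "J = insert j1 R"
  have AJ: "A = insert j0 J" "j0 \<notin> J" "finite J" "j1 \<notin> R" "finite R"
    using A by (auto simp: J_def R_def)
  define C' where "C' = {x \<in> space (LM (insert j1 R)). x j1 \<in> B1 \<and> restrict x R \<in> C}"
  have C'm: "C' \<in> sets (LM J)" unfolding C'_def J_def
    by (rule prod_set_sets) (use B C in \<open>auto simp: R_def\<close>)
  have seteq: "{z \<in> space (LM A). z j0 \<in> B0 \<and> z j1 \<in> B1 \<and> restrict z R \<in> C}
      = {z \<in> space (LM (insert j0 J)). z j0 \<in> B0 \<and> restrict z J \<in> C'}"
  proof -
    have "restrict (restrict z J) R = restrict z R" for z by (auto simp: J_def fun_eq_iff)
    moreover have "z \<in> space (LM A) \<Longrightarrow> restrict z J \<in> space (LM J)" for z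
      by (auto simp: space_PiM)
    moreover have "insert j1 R \<inter> R = R" by auto
    ultimately show ?thesis unfolding C'_def using AJ(1) by (auto simp: J_def)
  qed
  show ?thesis
    unfolding R_def[symmetric] seteq
    apply (subst AJ(1))
    apply (subst emeasure_insert_prod[OF AJ(3) AJ(2) B(1) C'm])
    unfolding C'_def J_def
    apply (subst emeasure_insert_prod[OF AJ(5) AJ(4) B(2)])
    using C by (auto simp: R_def)
qed

lemma gi_ev: "j0 \<in> A \<Longrightarrow> finite A \<Longrightarrow> gi A z (ev A j0) = z j0"
  unfolding gi_def ev_def by (simp add: if_distrib cong: if_cong)

lemma gn_ev: "j0 \<in> A \<Longrightarrow> finite A \<Longrightarrow> gn A (ev A j0) = 1"
  unfolding gn_def using gi_ev[of j0 A "ev A j0"] by (simp add: ev_def)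

lemma gi_split:
  assumes A: "finite A" "j0 \<in> A" "j1 \<in> A" "j0 \<noteq> j1"
  shows "gi A z z = (z j0)\<^sup>2 + (z j1)\<^sup>2 + (\<Sum>i\<in>A - {j0, j1}. (restrict z (A - {j0, j1}) i)\<^sup>2)"
proof -
  have "gi A z z = z j0 * z j0 + z j1 * z j1 + (\<Sum>i\<in>A - {j0} - {j1}. z i * z i)"
    unfolding gi_def using A by (simp add: sum.remove[of A j0] sum.remove[of "A - {j0}" j1])
  also have "(\<Sum>i\<in>A - {j0} - {j1}. z i * z i) = (\<Sum>i\<in>A - {j0, j1}. (restrict z (A - {j0, j1}) i)\<^sup>2)"
    by (intro sum.cong) (auto simp: power2_eq_square)
  finally show ?thesis by (simp add: power2_eq_square)
qed

lemma cap_fin: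
  assumes A: "finite A" and R2: "R2 > 0"
  shows "cap A {R1..<R2} cc u \<in> fmeasurable (LM A)"
proof -
  have sub: "cap A {R1..<R2} cc u \<subseteq> cball_s A R2"
    by (auto simp: cap_def cball_s_def gn_def gi_def power2_eq_square)
  show ?thesis
    using emeasure_mono[OF sub cball_s_sets[OF A]] emeasure_cball_s[OF A R2] cap_sets[OF A, of "{R1..<R2}" cc u]
    by (intro fmeasurableI) (auto simp: top.not_eq_extremum le_less_trans)
qed

lemma cap_upper:
  assumes A: "finite A" "j0 \<in> A" "j1 \<in> A" "j0 \<noteq> j1"
    and cc: "0 \<le> cc" and R: "0 \<le> R1" "R1 < R2" and X: "0 < R2\<^sup>2 - cc\<^sup>2 * R1\<^sup>2"
  shows "measure (LM A) (cap A {R1..<R2} cc (ev A j0))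
      \<le> R2 * (2 * R2 * (unit_ball_vol (real (card A - 2)) * sqrt (R2\<^sup>2 - cc\<^sup>2 * R1\<^sup>2) ^ (card A - 2)))"
proof -
  define Rs where "Rs = A - {j0, j1}"
  have cR: "card Rs = card A - 2" "finite Rs" using A by (auto simp: Rs_def card_Diff_subset)
  define X where "X = sqrt (R2\<^sup>2 - cc\<^sup>2 * R1\<^sup>2)"
  have Xp: "X > 0" using X by (simp add: X_def)
  define U where "U = {z \<in> space (LM A). z j0 \<in> {0..R2} \<and> z j1 \<in> {-R2..R2} \<and> restrict z Rs \<in> cball_s Rs X}"
  have Ue: "emeasure (LM A) U = ennreal R2 * (ennreal (2 * R2) * ennreal (unit_ball_vol (real (card A - 2)) * X ^ (card A - 2)))"
    unfolding U_def Rs_def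
    apply (subst emeasure_prod2[OF A])
    using emeasure_cball_s[OF cR(2) Xp] R cR by (auto simp: Rs_def)
  have Um: "U \<in> sets (LM A)" unfolding U_def Rs_def
    by (rule sets_prod2) (use A cR in \<open>auto simp: Rs_def\<close>)
  have sub: "cap A {R1..<R2} cc (ev A j0) \<subseteq> U"
  proof
    fix z assume z: "z \<in> cap A {R1..<R2} cc (ev A j0)"
    let ?W = "\<Sum>i\<in>Rs. (restrict z Rs i)\<^sup>2"
    have sp: "z \<in> space (LM A)" and g1: "R1 \<le> gn A z" and g2: "gn A z < R2" and c0: "z j0 \<ge> gn A z * cc"
      using z A by (auto simp: cap_def gi_ev gn_ev)
    have gs: "gi A z z = (z j0)\<^sup>2 + (z j1)\<^sup>2 + ?W" using gi_split[OF A] by (simp add: Rs_def)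
    have W0: "?W \<ge> 0" by (intro sum_nonneg) auto
    have gi0: "gi A z z \<ge> 0" using gs W0 by simp
    have "sqrt (gi A z z) ^ 2 < R2\<^sup>2" using g2 g1 R by (intro power_strict_mono) (auto simp: gn_def simp del: real_sqrt_ge_0_iff)
    then have gg: "gi A z z < R2\<^sup>2" using gi0 by simp
    have z0: "z j0 \<ge> R1 * cc" using c0 g1 cc by (meson mult_right_mono order_trans)
    have z0p: "z j0 \<ge> 0" using z0 R cc by (meson mult_nonneg_nonneg order_trans)
    have "(z j0)\<^sup>2 < R2\<^sup>2" using gs gg W0 by (smt (verit) zero_le_power2)
    then have a0: "z j0 \<le> R2" using z0p R by (smt (verit) power_mono)
    have "(z j1)\<^sup>2 < R2\<^sup>2" using gs gg W0 by (smt (verit) zero_le_power2)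
    then have a1: "\<bar>z j1\<bar> \<le> R2" using R power2_less_imp_less[of "\<bar>z j1\<bar>" R2] by simp
    have "(R1 * cc)\<^sup>2 \<le> (z j0)\<^sup>2" using z0 R cc by (intro power_mono) auto
    then have h1: "cc\<^sup>2 * R1\<^sup>2 \<le> (z j0)\<^sup>2" by (simp add: power_mult_distrib mult.commute)
    have "?W \<le> R2\<^sup>2 - cc\<^sup>2 * R1\<^sup>2" using gs gg h1 zero_le_power2[of "z j1"] by linarith
    then have "?W \<le> X\<^sup>2" using X by (simp add: X_def)
    then have "sqrt ?W \<le> X" using Xp by (metis less_eq_real_def real_le_lsqrt real_sqrt_le_mono real_sqrt_pow2 zero_le_power2 real_sqrt_power)
    then show "z \<in> U" unfolding U_def cball_s_def using sp a0 a1 z0p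
      by (auto simp: space_PiM PiE_def)
  qed
  have Ufin: "U \<in> fmeasurable (LM A)" using Um Ue by (intro fmeasurableI) (auto simp: ennreal_mult_less_top)
  have "measure (LM A) (cap A {R1..<R2} cc (ev A j0)) \<le> measure (LM A) U"
    by (rule measure_mono_fmeasurable[OF sub]) (use A Ufin in auto)
  also have "measure (LM A) U = R2 * (2 * R2 * (unit_ball_vol (real (card A - 2)) * X ^ (card A - 2)))"
    using Ue R Xp unfolding measure_def
    by (simp add: ennreal_mult'[symmetric] ennreal_mult[symmetric])
  finally show ?thesis by (simp add: X_def)
qed


lemma cap_lower:
  assumes A: "finite A" "j0 \<in> A" "j1 \<in> A" "j0 \<noteq> j1"
    and cc: "0 \<le> cc" and h: "0 < h" and al: "0 \<le> al" and b: "0 < b1" "b1 < b2"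
    and c1: "R1\<^sup>2 \<le> al\<^sup>2 + b1\<^sup>2" and c2: "(al + h)\<^sup>2 + h\<^sup>2 + b2\<^sup>2 < R2\<^sup>2" and c3: "cc * R2 \<le> al"
    and R2: "R2 > 0"
  shows "h * (h * (unit_ball_vol (real (card A - 2)) * (b2 ^ (card A - 2) - b1 ^ (card A - 2))))
      \<le> measure (LM A) (cap A {R1..<R2} cc (ev A j0))"
proof -
  define Rs where "Rs = A - {j0, j1}"
  have cR: "card Rs = card A - 2" "finite Rs" using A by (auto simp: Rs_def card_Diff_subset)
  let ?v = "unit_ball_vol (real (card A - 2))"
  have Cm: "cball_s Rs b2 - cball_s Rs b1 \<in> sets (LM Rs)" using cR by auto
  define L where "L = {z \<in> space (LM A). z j0 \<in> {al..al+h} \<and> z j1 \<in> {0..h} \<and> restrict z Rs \<in> cball_s Rs b2 - cball_s Rs b1}"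
  have Lm: "L \<in> sets (LM A)" unfolding L_def
    by (rule sets_prod2) (use A Cm in \<open>auto simp: Rs_def\<close>)
  have sb: "cball_s Rs b1 \<subseteq> cball_s Rs b2" using b by (auto simp: cball_s_def)
  have "emeasure (LM Rs) (cball_s Rs b2 - cball_s Rs b1) = emeasure (LM Rs) (cball_s Rs b2) - emeasure (LM Rs) (cball_s Rs b1)"
    using emeasure_cball_s[OF cR(2), of b1] b cR sb by (intro emeasure_Diff) auto
  also have "\<dots> = ennreal (?v * b2 ^ (card A - 2) - ?v * b1 ^ (card A - 2))"
    using emeasure_cball_s[OF cR(2), of b1] emeasure_cball_s[OF cR(2), of b2] b cR
    by (simp add: ennreal_minus)
  finally have eC: "emeasure (LM Rs) (cball_s Rs b2 - cball_s Rs b1) = ennreal (?v * (b2 ^ (card A - 2) - b1 ^ (card A - 2)))"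
    by (simp add: algebra_simps)
  have pw: "b1 ^ (card A - 2) \<le> b2 ^ (card A - 2)" using b by (intro power_mono) auto
  have Le: "emeasure (LM A) L = ennreal h * (ennreal h * ennreal (?v * (b2 ^ (card A - 2) - b1 ^ (card A - 2))))"
    unfolding L_def Rs_def
    apply (subst emeasure_prod2[OF A])
    using Cm eC h by (auto simp: Rs_def)
  have sub: "L \<subseteq> cap A {R1..<R2} cc (ev A j0)"
  proof
    fix z assume z: "z \<in> L"
    let ?W = "\<Sum>i\<in>Rs. (restrict z Rs i)\<^sup>2"
    have sp: "z \<in> space (LM A)" and z0: "al \<le> z j0" "z j0 \<le> al + h" and z1: "0 \<le> z j1" "z j1 \<le> h"
      and w: "sqrt ?W \<le> b2" "\<not> sqrt ?W \<le> b1"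
      using z by (auto simp: L_def cball_s_def space_PiM PiE_def)
    have W0: "?W \<ge> 0" by (intro sum_nonneg) auto
    have "b1 ^ 2 < sqrt ?W ^ 2" using w(2) b by (intro power_strict_mono) auto
    then have w1: "b1\<^sup>2 < ?W" using W0 by simp
    have "sqrt ?W ^ 2 \<le> b2 ^ 2" by (rule power_mono[OF w(1) real_sqrt_ge_zero[OF W0]])
    then have w2: "?W \<le> b2\<^sup>2" using W0 by simp
    have gs: "gi A z z = (z j0)\<^sup>2 + (z j1)\<^sup>2 + ?W" using gi_split[OF A] by (simp add: Rs_def)
    have s0: "al\<^sup>2 \<le> (z j0)\<^sup>2" using z0 al by (intro power_mono) auto
    have s0': "(z j0)\<^sup>2 \<le> (al + h)\<^sup>2" using z0 al by (intro power_mono) auto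
    have s1: "(z j1)\<^sup>2 \<le> h\<^sup>2" using z1 by (intro power_mono) auto
    have "R1\<^sup>2 \<le> gi A z z" using gs c1 s0 w1 zero_le_power2[of "z j1"] by linarith
    then have g1: "R1 \<le> gn A z" unfolding gn_def by (rule real_le_rsqrt)
    have "gi A z z < R2\<^sup>2" using gs c2 s0' s1 w2 by linarith
    then have g2: "gn A z < R2" unfolding gn_def using real_sqrt_less_mono[of "gi A z z" "R2\<^sup>2"] R2 by simp
    have "gn A z * cc \<le> R2 * cc" using g2 cc by (intro mult_right_mono) auto
    then have g3: "gn A z * cc \<le> z j0" using c3 z0 by (simp add: mult.commute)
    show "z \<in> cap A {R1..<R2} cc (ev A j0)"
      using sp g1 g2 g3 A by (simp add: cap_def gi_ev gn_ev)
  qed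
  have Lfin: "L \<in> fmeasurable (LM A)" using Lm Le by (intro fmeasurableI) (auto simp: ennreal_mult_less_top)
  have "measure (LM A) L \<le> measure (LM A) (cap A {R1..<R2} cc (ev A j0))"
    by (rule measure_mono_fmeasurable[OF sub]) (use Lm cap_fin[OF A(1) R2] in auto)
  moreover have "measure (LM A) L = h * (h * (?v * (b2 ^ (card A - 2) - b1 ^ (card A - 2))))"
    using Le h pw unfolding measure_def
    by (simp add: ennreal_mult'[symmetric] ennreal_mult[symmetric])
  ultimately show ?thesis by simp
qed


lemma lim_inv_sqrt: "((\<lambda>n. 1 / sqrt (real n)) \<longlongrightarrow> 0) sequentially"
proof -
  have "((\<lambda>n. sqrt (1 / real n)) \<longlongrightarrow> sqrt 0) sequentially"
    by (intro tendsto_real_sqrt lim_inverse_n')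
  then show ?thesis by (simp add: real_sqrt_divide)
qed

lemma lim_over_n: "(f \<longlongrightarrow> l) sequentially \<Longrightarrow> ((\<lambda>n. f n / real n) \<longlongrightarrow> 0) sequentially"
proof -
  assume f: "(f \<longlongrightarrow> l) sequentially"
  have "((\<lambda>n. f n * (1 / real n)) \<longlongrightarrow> l * 0) sequentially"
    by (intro tendsto_mult f lim_inverse_n')
  then show ?thesis by simp
qed

lemma ln_sandwich:
  assumes ev: "\<forall>\<^sub>F n in sequentially. 0 < lo n \<and> lo n \<le> V n \<and> V n \<le> up n"
    and l1: "((\<lambda>n. ln (lo n) / real n) \<longlongrightarrow> L) sequentially"
    and l2: "((\<lambda>n. ln (up n) / real n) \<longlongrightarrow> L) sequentially"
  shows "((\<lambda>n. ln (V n) / real n) \<longlongrightarrow> L) sequentially"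
proof (rule tendsto_sandwich[OF _ _ l1 l2])
  show "\<forall>\<^sub>F n in sequentially. ln (lo n) / real n \<le> ln (V n) / real n"
    using ev by eventually_elim (auto intro!: divide_right_mono)
  show "\<forall>\<^sub>F n in sequentially. ln (V n) / real n \<le> ln (up n) / real n"
    using ev by eventually_elim (auto intro!: divide_right_mono)
qed

lemma ubv_ratio: "unit_ball_vol (real k) / unit_ball_vol (real (k + 2)) = real (k + 2) / (2 * pi)"
proof -
  have g: "Gamma (real k / 2 + 2) = (real k / 2 + 1) * Gamma (real k / 2 + 1)"
  proof -
    have "real k / 2 + 1 \<notin> \<int>\<^sub>\<le>\<^sub>0"
    proof
      assume "real k / 2 + 1 \<in> \<int>\<^sub>\<le>\<^sub>0"
      then have "real k / 2 + 1 \<le> 0" by (rule nonpos_Ints_nonpos)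
      then show False by (simp add: add_nonneg_pos)
    qed
    then show ?thesis using Gamma_plus1[of "real k / 2 + 1"] by (simp add: add.assoc)
  qed
  have p: "pi powr (real (k + 2) / 2) = pi * pi powr (real k / 2)"
    by (simp add: add_divide_distrib powr_add)
  have gp: "Gamma (real k / 2 + 1) > 0" by (intro Gamma_real_pos) simp
  define G where "G = Gamma (real k / 2 + 1)"
  define P where "P = pi powr (real k / 2)"
  have Pp: "P > 0" unfolding P_def by simp
  have e2: "real (k + 2) / 2 + 1 = real k / 2 + 2" by simp
  have v1: "unit_ball_vol (real k) = P / G" unfolding unit_ball_vol_def P_def G_def by simp
  have v2: "unit_ball_vol (real (k + 2)) = pi * P / ((real k / 2 + 1) * G)"
    unfolding unit_ball_vol_def p e2 g P_def G_def by simp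
  have "P / G / (pi * P / ((real k / 2 + 1) * G)) = (real k / 2 + 1) / pi"
    using Pp gp pi_gt_zero unfolding G_def[symmetric] by (simp add: divide_simps)
  also have "\<dots> = real (k + 2) / (2 * pi)" by (simp add: divide_simps)
  finally show ?thesis unfolding v1 v2 .
qed


definition "cN c n = c + 1 / sqrt (real n)"
definition "R1N D n = D - 3 / real n"
definition "R2N D n = D - 2 / real n"
definition "hN (n::nat) = 1 / (real n)\<^sup>2"
definition "alN D c n = cN c n * R2N D n"
definition "b1N D c n = sqrt ((R1N D n)\<^sup>2 - (alN D c n)\<^sup>2)"
definition "b2N D c n = sqrt ((R2N D n)\<^sup>2 - (alN D c n + hN n)\<^sup>2 - (hN n)\<^sup>2 - hN n)"
definition "XN D c n = sqrt ((R2N D n)\<^sup>2 - (cN c n)\<^sup>2 * (R1N D n)\<^sup>2)"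

locale asy =
  fixes D c :: real
  assumes D: "D > 0" and c: "0 < c" "c < 1"
begin

lemma bt: "D\<^sup>2 - (c * D)\<^sup>2 > 0"
proof -
  have "(c * D)\<^sup>2 < (1 * D)\<^sup>2" using c D by (intro power_strict_mono) auto
  then show ?thesis by simp
qed

definition "\<beta> = sqrt (D\<^sup>2 - (c * D)\<^sup>2)"

lemma beta_pos: "\<beta> > 0" unfolding \<beta>_def using bt by simp

lemma lim_cN: "(cN c \<longlongrightarrow> c) sequentially"
  unfolding cN_def[abs_def] using tendsto_add[OF tendsto_const lim_inv_sqrt, of c] by simp

lemma lim_R1N: "(R1N D \<longlongrightarrow> D) sequentially"
  unfolding R1N_def[abs_def] using tendsto_diff[OF tendsto_const tendsto_mult[OF tendsto_const lim_inverse_n', of 3], of D] by simp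

lemma lim_R2N: "(R2N D \<longlongrightarrow> D) sequentially"
  unfolding R2N_def[abs_def] using tendsto_diff[OF tendsto_const tendsto_mult[OF tendsto_const lim_inverse_n', of 2], of D] by simp

lemma lim_hN: "(hN \<longlongrightarrow> 0) sequentially"
  unfolding hN_def[abs_def] using tendsto_power[OF lim_inverse_n', of 2] by (simp add: power_divide)

lemma lim_nhN: "((\<lambda>n. real n * hN n) \<longlongrightarrow> 0) sequentially"
proof -
  have "\<forall>\<^sub>F n in sequentially. 1 / real n = real n * hN n"
    using eventually_gt_at_top[of 0] by eventually_elim (simp add: hN_def power2_eq_square)
  then have "((\<lambda>n. 1 / real n) \<longlongrightarrow> 0) sequentially = ((\<lambda>n. real n * hN n) \<longlongrightarrow> 0) sequentially"
    by (rule tendsto_cong)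
  then show ?thesis using lim_inverse_n' by simp
qed

lemma lim_alN: "(alN D c \<longlongrightarrow> c * D) sequentially"
  unfolding alN_def[abs_def] by (intro tendsto_mult lim_cN lim_R2N)

lemma lim_XN: "(XN D c \<longlongrightarrow> \<beta>) sequentially"
proof -
  have "((\<lambda>n. (R2N D n)\<^sup>2 - (cN c n)\<^sup>2 * (R1N D n)\<^sup>2) \<longlongrightarrow> D\<^sup>2 - c\<^sup>2 * D\<^sup>2) sequentially"
    by (intro tendsto_intros lim_R2N lim_cN lim_R1N)
  then show ?thesis unfolding XN_def[abs_def] \<beta>_def
    by (intro tendsto_real_sqrt) (simp add: power_mult_distrib)
qed

lemma lim_b1N: "(b1N D c \<longlongrightarrow> \<beta>) sequentially"
  unfolding b1N_def[abs_def] \<beta>_def by (intro tendsto_intros lim_R1N lim_alN)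

lemma lim_b2N: "(b2N D c \<longlongrightarrow> \<beta>) sequentially"
proof -
  have "((\<lambda>n. (R2N D n)\<^sup>2 - (alN D c n + hN n)\<^sup>2 - (hN n)\<^sup>2 - hN n) \<longlongrightarrow> D\<^sup>2 - (c * D + 0)\<^sup>2 - 0\<^sup>2 - 0) sequentially"
    by (intro tendsto_intros lim_R2N lim_alN lim_hN)
  then show ?thesis unfolding b2N_def[abs_def] \<beta>_def by (intro tendsto_real_sqrt) simp
qed

end

context asy
begin
lemma lim_nb: "((\<lambda>n. real n * ((b2N D c n)\<^sup>2 - (b1N D c n)\<^sup>2)) \<longlongrightarrow> 2 * D) sequentially"
proof -
  have ev: "\<forall>\<^sub>F n in sequentially. (R2N D n)\<^sup>2 - (alN D c n + hN n)\<^sup>2 - (hN n)\<^sup>2 - hN n > 0 \<and>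
      (R1N D n)\<^sup>2 - (alN D c n)\<^sup>2 > 0 \<and> real n > 0"
  proof -
    have l1: "((\<lambda>n. (R2N D n)\<^sup>2 - (alN D c n + hN n)\<^sup>2 - (hN n)\<^sup>2 - hN n) \<longlongrightarrow> D\<^sup>2 - (c * D + 0)\<^sup>2 - 0\<^sup>2 - 0) sequentially"
      by (intro tendsto_intros lim_R2N lim_alN lim_hN)
    have l2: "((\<lambda>n. (R1N D n)\<^sup>2 - (alN D c n)\<^sup>2) \<longlongrightarrow> D\<^sup>2 - (c * D)\<^sup>2) sequentially"
      by (intro tendsto_intros lim_R1N lim_alN)
    have e3: "\<forall>\<^sub>F n in sequentially. real n > 0"
      using eventually_gt_at_top[of 0] by (rule eventually_mono) simp
    have E1: "\<forall>\<^sub>F n in sequentially. (R2N D n)\<^sup>2 - (alN D c n + hN n)\<^sup>2 - (hN n)\<^sup>2 - hN n > 0"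
      using order_tendstoD(1)[OF l1, of 0] bt by simp
    have E2: "\<forall>\<^sub>F n in sequentially. (R1N D n)\<^sup>2 - (alN D c n)\<^sup>2 > 0"
      using order_tendstoD(1)[OF l2, of 0] bt by simp
    show ?thesis using E1 E2 e3 by (intro eventually_conj)
  qed
  have eq: "\<forall>\<^sub>F n in sequentially. real n * ((b2N D c n)\<^sup>2 - (b1N D c n)\<^sup>2)
      = (2 * D - 5 * (1 / real n)) - (2 * alN D c n * (real n * hN n) + 2 * hN n * (real n * hN n) + real n * hN n)"
    using ev
  proof eventually_elim
    case (elim n)
    then have "real n * ((b2N D c n)\<^sup>2 - (b1N D c n)\<^sup>2) = real n * (((R2N D n)\<^sup>2 - (R1N D n)\<^sup>2) - 2 * alN D c n * hN n - 2 * (hN n)\<^sup>2 - hN n)"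
      unfolding b1N_def b2N_def by (simp add: algebra_simps power2_eq_square)
    also have "real n * ((R2N D n)\<^sup>2 - (R1N D n)\<^sup>2) = 2 * D - 5 * (1 / real n)"
      using elim unfolding R1N_def R2N_def by (simp add: field_simps power2_eq_square)
    ultimately show ?case by (simp add: algebra_simps power2_eq_square)
  qed
  have "((\<lambda>n. (2 * D - 5 * (1 / real n)) - (2 * alN D c n * (real n * hN n) + 2 * hN n * (real n * hN n) + real n * hN n))
      \<longlongrightarrow> (2 * D - 5 * 0) - (2 * (c * D) * 0 + 2 * 0 * 0 + 0)) sequentially"
    by (intro tendsto_intros lim_inverse_n' lim_alN lim_nhN lim_hN)
  then show ?thesis using tendsto_cong[OF eq] by simp
qed

lemma lim_nbd: "((\<lambda>n. real n * (b2N D c n - b1N D c n)) \<longlongrightarrow> D / \<beta>) sequentially"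
proof -
  have l: "((\<lambda>n. real n * ((b2N D c n)\<^sup>2 - (b1N D c n)\<^sup>2) / (b2N D c n + b1N D c n)) \<longlongrightarrow> 2 * D / (\<beta> + \<beta>)) sequentially"
    using beta_pos by (intro tendsto_intros lim_nb lim_b2N lim_b1N) auto
  have "\<forall>\<^sub>F n in sequentially. b2N D c n + b1N D c n > 0"
    using order_tendstoD(1)[OF tendsto_add[OF lim_b2N lim_b1N], of 0] beta_pos by simp
  then have evq: "\<forall>\<^sub>F n in sequentially. real n * ((b2N D c n)\<^sup>2 - (b1N D c n)\<^sup>2) / (b2N D c n + b1N D c n) = real n * (b2N D c n - b1N D c n)"
    by eventually_elim (simp add: power2_eq_square field_simps)
  moreover have "2 * D / (\<beta> + \<beta>) = D / \<beta>" using beta_pos by (simp add: field_simps)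
  ultimately show ?thesis using l tendsto_cong[OF evq] by simp
qed

end


lemma lim_ln_mulpow:
  assumes "((\<lambda>n. g n * real n ^ k) \<longlongrightarrow> a) sequentially" "a > 0"
  shows "((\<lambda>n. ln (g n) / real n) \<longlongrightarrow> 0) sequentially"
proof -
  have ev: "\<forall>\<^sub>F n in sequentially. g n * real n ^ k > 0 \<and> n > 0"
    using order_tendstoD(1)[OF assms(1) assms(2)] eventually_gt_at_top[of 0] by (rule eventually_conj)
  have eq: "\<forall>\<^sub>F n in sequentially. ln (g n * real n ^ k) / real n - real k * (ln (real n) / real n) = ln (g n) / real n"
    using ev
  proof eventually_elim
    case (elim n)
    then have "g n > 0" by (metis of_nat_0_less_iff zero_less_mult_pos2 zero_less_power)
    then have "ln (g n * real n ^ k) = ln (g n) + real k * ln (real n)" using elim by (simp add: ln_mult ln_realpow)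
    then show ?case by (simp add: add_divide_distrib)
  qed
  have "((\<lambda>n. ln (g n * real n ^ k) / real n - real k * (ln (real n) / real n)) \<longlongrightarrow> 0 - real k * 0) sequentially"
    by (intro tendsto_intros lim_over_n[OF tendsto_ln[OF assms(1)]] lim_ln_over_n) (use assms in auto)
  then show ?thesis using tendsto_cong[OF eq] by simp
qed

lemma lim_ln_divn:
  assumes "((\<lambda>n. g n / real n) \<longlongrightarrow> a) sequentially" "a > 0"
  shows "((\<lambda>n. ln (g n) / real n) \<longlongrightarrow> 0) sequentially"
proof -
  have ev: "\<forall>\<^sub>F n in sequentially. g n / real n > 0 \<and> n > 0"
    using order_tendstoD(1)[OF assms(1) assms(2)] eventually_gt_at_top[of 0] by (rule eventually_conj)
  have eq: "\<forall>\<^sub>F n in sequentially. ln (g n / real n) / real n + ln (real n) / real n = ln (g n) / real n"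
    using ev
  proof eventually_elim
    case (elim n)
    then have "g n > 0" by (simp add: zero_less_divide_iff)
    then show ?case using elim by (simp add: ln_div add_divide_distrib[symmetric])
  qed
  have "((\<lambda>n. ln (g n / real n) / real n + ln (real n) / real n) \<longlongrightarrow> 0 + 0) sequentially"
    by (intro tendsto_intros lim_over_n[OF tendsto_ln[OF assms(1)]] lim_ln_over_n) (use assms in auto)
  then show ?thesis using tendsto_cong[OF eq] by simp
qed

lemma lim_nat_minus: "((\<lambda>n. real (n - k) / real n) \<longlongrightarrow> 1) sequentially"
proof -
  have eq: "\<forall>\<^sub>F n in sequentially. 1 - real k * (1 / real n) = real (n - k) / real n"
    using eventually_ge_at_top[of "k + 1"] by eventually_elim (simp add: of_nat_diff field_simps)
  have "((\<lambda>n. 1 - real k * (1 / real n)) \<longlongrightarrow> 1 - real k * 0) sequentially"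
    by (intro tendsto_intros lim_inverse_n')
  then show ?thesis using tendsto_cong[OF eq] by simp
qed

lemma pow_diff_ge:
  fixes x y :: real
  assumes "0 \<le> y" "y \<le> x"
  shows "(x - y) * x ^ k \<le> x ^ Suc k - y ^ Suc k"
proof -
  have "y ^ k \<le> x ^ k" using assms by (intro power_mono) auto
  then have "y * y ^ k \<le> y * x ^ k" using assms by (intro mult_left_mono) auto
  then show ?thesis by (simp add: algebra_simps)
qed

definition "UPN D c n = R2N D n * (2 * R2N D n * (unit_ball_vol (real (n - 4)) * XN D c n ^ (n - 4)))"
definition "LON D c n = hN n * (hN n * (unit_ball_vol (real (n - 4)) * (b2N D c n ^ (n - 4) - b1N D c n ^ (n - 4))))"

context asy
begin

lemma lim_up:
  assumes K: "K > 0"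
  shows "((\<lambda>n. ln (UPN D c n / (K * unit_ball_vol (real (n - 2)))) / real n) \<longlongrightarrow> ln \<beta>) sequentially"
proof -
  let ?g = "\<lambda>n. real (n - 2) / (2 * pi * K)"
  have ev: "\<forall>\<^sub>F n in sequentially. n \<ge> 4 \<and> R2N D n > 0 \<and> XN D c n > 0"
    using eventually_ge_at_top[of 4] order_tendstoD(1)[OF lim_R2N, of 0] order_tendstoD(1)[OF lim_XN, of 0] D beta_pos
    by (auto intro: eventually_conj)
  have eq: "\<forall>\<^sub>F n in sequentially.
      ln (2 * (R2N D n)\<^sup>2) / real n + ln (?g n) / real n + real (n - 4) / real n * ln (XN D c n)
      = ln (UPN D c n / (K * unit_ball_vol (real (n - 2)))) / real n"
    using ev
  proof eventually_elim
    case (elim n)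
    then have n4: "n - 2 = (n - 4) + 2" by (elim conjE) arith
    have vr: "unit_ball_vol (real (n - 4)) / unit_ball_vol (real (n - 2)) = real (n - 2) / (2 * pi)"
      unfolding n4 by (rule ubv_ratio)
    have vp: "unit_ball_vol (real (n - 2)) > 0" by simp
    have vne: "unit_ball_vol (real (n - 2)) \<noteq> 0" using unit_ball_vol_pos[of "real (n - 2)"] by linarith
    then have "unit_ball_vol (real (n - 4)) = unit_ball_vol (real (n - 2)) * (unit_ball_vol (real (n - 4)) / unit_ball_vol (real (n - 2)))"
      by (simp del: unit_ball_vol_pos)
    then have v4: "unit_ball_vol (real (n - 4)) = unit_ball_vol (real (n - 2)) * (real (n - 2) / (2 * pi))"
      unfolding vr .
    have "UPN D c n / (K * unit_ball_vol (real (n - 2))) = 2 * (R2N D n)\<^sup>2 * ?g n * XN D c n ^ (n - 4)"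
      unfolding UPN_def v4 using vne K by (simp add: field_simps power2_eq_square)
    note U = this
    have pg: "?g n > 0" using elim K by simp
    have pA: "2 * (R2N D n)\<^sup>2 > 0" using elim by simp
    have pX: "XN D c n > 0" using elim by simp
    have "ln (UPN D c n / (K * unit_ball_vol (real (n - 2)))) = ln (2 * (R2N D n)\<^sup>2 * ?g n * XN D c n ^ (n - 4))"
      by (simp only: U)
    also have "\<dots> = ln (2 * (R2N D n)\<^sup>2) + ln (?g n) + real (n - 4) * ln (XN D c n)"
      using ln_mult_pos[OF mult_pos_pos[OF pA pg] zero_less_power[OF pX, of "n - 4"]] ln_mult_pos[OF pA pg] ln_realpow by simp
    finally have "ln (UPN D c n / (K * unit_ball_vol (real (n - 2)))) = ln (2 * (R2N D n)\<^sup>2) + ln (?g n) + real (n - 4) * ln (XN D c n)" .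
    then show ?case by (simp add: add_divide_distrib)
  qed
  have g: "((\<lambda>n. ?g n / real n) \<longlongrightarrow> 1 / (2 * pi * K)) sequentially"
  proof -
    have e: "real (n - 2) / real n * (1 / (2 * pi * K)) = real (n - 2) / (2 * pi * K) / real n" for n
      by simp
    show ?thesis using tendsto_mult[OF lim_nat_minus[of 2] tendsto_const[of "1 / (2 * pi * K)"]] unfolding e by simp
  qed
  have "((\<lambda>n. ln (2 * (R2N D n)\<^sup>2) / real n + ln (?g n) / real n + real (n - 4) / real n * ln (XN D c n))
      \<longlongrightarrow> 0 + 0 + 1 * ln \<beta>) sequentially"
    by (intro tendsto_intros lim_over_n[OF tendsto_ln[OF tendsto_mult[OF tendsto_const tendsto_power[OF lim_R2N]]]]
         lim_ln_divn[OF g] lim_nat_minus tendsto_ln lim_XN) (use D K beta_pos in auto)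
  then show ?thesis using tendsto_cong[OF eq] by simp
qed

definition "LOp n = (hN n)\<^sup>2 * unit_ball_vol (real (n - 4)) * (b2N D c n - b1N D c n) * b2N D c n ^ (n - 5)"

lemma ev_b: "\<forall>\<^sub>F n in sequentially. 0 < b1N D c n \<and> b1N D c n < b2N D c n \<and> n \<ge> 5"
proof -
  have "\<forall>\<^sub>F n in sequentially. 0 < real n * (b2N D c n - b1N D c n)"
    using order_tendstoD(1)[OF lim_nbd, of 0] D beta_pos by simp
  moreover have "\<forall>\<^sub>F n in sequentially. 0 < b1N D c n" using order_tendstoD(1)[OF lim_b1N, of 0] beta_pos by simp
  ultimately show ?thesis using eventually_ge_at_top[of 5]
    by eventually_elim (auto simp: zero_less_mult_iff)
qed

lemma lim_lo:
  assumes K: "K > 0"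
  shows "((\<lambda>n. ln (LOp n / (K * unit_ball_vol (real (n - 2)))) / real n) \<longlongrightarrow> ln \<beta>) sequentially"
proof -
  let ?g = "\<lambda>n. real (n - 2) / (2 * pi * K)"
  have eq: "\<forall>\<^sub>F n in sequentially.
      2 * (ln (hN n) / real n) + ln (?g n) / real n + ln (b2N D c n - b1N D c n) / real n + real (n - 5) / real n * ln (b2N D c n)
      = ln (LOp n / (K * unit_ball_vol (real (n - 2)))) / real n"
    using ev_b
  proof eventually_elim
    case (elim n)
    then have n4: "n - 2 = (n - 4) + 2" by (elim conjE) arith
    have vr: "unit_ball_vol (real (n - 4)) / unit_ball_vol (real (n - 2)) = real (n - 2) / (2 * pi)"
      unfolding n4 by (rule ubv_ratio)
    have vp: "unit_ball_vol (real (n - 2)) > 0" by simp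
    have vne: "unit_ball_vol (real (n - 2)) \<noteq> 0" using unit_ball_vol_pos[of "real (n - 2)"] by linarith
    then have "unit_ball_vol (real (n - 4)) = unit_ball_vol (real (n - 2)) * (unit_ball_vol (real (n - 4)) / unit_ball_vol (real (n - 2)))"
      by (simp del: unit_ball_vol_pos)
    then have v4: "unit_ball_vol (real (n - 4)) = unit_ball_vol (real (n - 2)) * (real (n - 2) / (2 * pi))"
      unfolding vr .
    have "LOp n / (K * unit_ball_vol (real (n - 2))) = (hN n)\<^sup>2 * ?g n * (b2N D c n - b1N D c n) * b2N D c n ^ (n - 5)"
      unfolding LOp_def v4 using vne K by (simp add: field_simps)
    note U = this
    have pg: "?g n > 0" and ph: "hN n > 0" using elim K by (auto simp: hN_def)
    have pA: "(hN n)\<^sup>2 > 0" using ph by simp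
    have pB: "b2N D c n - b1N D c n > 0" and pX: "b2N D c n > 0" using elim by auto
    have "ln (LOp n / (K * unit_ball_vol (real (n - 2)))) = ln ((hN n)\<^sup>2 * ?g n * (b2N D c n - b1N D c n) * b2N D c n ^ (n - 5))"
      by (simp only: U)
    also have "\<dots> = ln ((hN n)\<^sup>2) + ln (?g n) + ln (b2N D c n - b1N D c n) + real (n - 5) * ln (b2N D c n)"
      using ln_mult_pos[OF mult_pos_pos[OF mult_pos_pos[OF pA pg] pB] zero_less_power[OF pX, of "n - 5"]]
        ln_mult_pos[OF mult_pos_pos[OF pA pg] pB] ln_mult_pos[OF pA pg] ln_realpow by simp
    also have "ln ((hN n)\<^sup>2) = 2 * ln (hN n)" using ln_realpow[of "hN n" 2] by simp
    finally have "ln (LOp n / (K * unit_ball_vol (real (n - 2)))) = 2 * ln (hN n) + ln (?g n) + ln (b2N D c n - b1N D c n) + real (n - 5) * ln (b2N D c n)" .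
    then show ?case by (simp add: add_divide_distrib)
  qed
  have g: "((\<lambda>n. ?g n / real n) \<longlongrightarrow> 1 / (2 * pi * K)) sequentially"
  proof -
    have e: "real (n - 2) / real n * (1 / (2 * pi * K)) = real (n - 2) / (2 * pi * K) / real n" for n
      by simp
    show ?thesis using tendsto_mult[OF lim_nat_minus[of 2] tendsto_const[of "1 / (2 * pi * K)"]] unfolding e by simp
  qed
  have h: "((\<lambda>n. hN n * real n ^ 2) \<longlongrightarrow> 1) sequentially"
  proof -
    have "\<forall>\<^sub>F n in sequentially. 1 = hN n * real n ^ 2"
      using eventually_gt_at_top[of 0] by eventually_elim (simp add: hN_def)
    then have "((\<lambda>n. 1::real) \<longlongrightarrow> 1) sequentially = ((\<lambda>n. hN n * real n ^ 2) \<longlongrightarrow> 1) sequentially"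
      by (rule tendsto_cong)
    then show ?thesis by simp
  qed
  have bd: "((\<lambda>n. (b2N D c n - b1N D c n) * real n ^ 1) \<longlongrightarrow> D / \<beta>) sequentially"
    using lim_nbd by (simp add: mult.commute)
  have "((\<lambda>n. 2 * (ln (hN n) / real n) + ln (?g n) / real n + ln (b2N D c n - b1N D c n) / real n + real (n - 5) / real n * ln (b2N D c n))
      \<longlongrightarrow> 2 * 0 + 0 + 0 + 1 * ln \<beta>) sequentially"
    by (intro tendsto_intros lim_ln_mulpow[OF h] lim_ln_divn[OF g] lim_ln_mulpow[OF bd]
         lim_nat_minus tendsto_ln lim_b2N) (use D K beta_pos in auto)
  then show ?thesis using tendsto_cong[OF eq] by simp
qed

lemma LOp_le: "\<forall>\<^sub>F n in sequentially. 0 < LOp n \<and> LOp n \<le> LON D c n"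
  using ev_b
proof eventually_elim
  case (elim n)
  then have n5: "n - 4 = Suc (n - 5)" by (elim conjE) arith
  have hp: "hN n > 0" using elim by (simp add: hN_def)
  have p: "(b2N D c n - b1N D c n) * b2N D c n ^ (n - 5) \<le> b2N D c n ^ (n - 4) - b1N D c n ^ (n - 4)"
    unfolding n5 by (rule pow_diff_ge) (use elim in auto)
  have "LOp n = hN n * (hN n * (unit_ball_vol (real (n - 4)) * ((b2N D c n - b1N D c n) * b2N D c n ^ (n - 5))))"
    unfolding LOp_def by (simp add: power2_eq_square mult_ac)
  also have "\<dots> \<le> LON D c n" unfolding LON_def using hp p
    by (intro mult_left_mono) auto
  finally have "LOp n \<le> LON D c n" .
  moreover have "0 < LOp n" unfolding LOp_def using elim hp by (intro mult_pos_pos) auto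
  ultimately show ?case by simp
qed

lemma main_asym:
  assumes K: "K > 0"
    and b: "\<forall>\<^sub>F n in sequentially. LON D c n \<le> Q n \<and> Q n \<le> UPN D c n"
  shows "((\<lambda>n. ln (Q n / (K * unit_ball_vol (real (n - 2)))) / real n) \<longlongrightarrow> ln \<beta>) sequentially"
proof (rule ln_sandwich[OF _ lim_lo[OF K] lim_up[OF K]])
  show "\<forall>\<^sub>F n in sequentially. 0 < LOp n / (K * unit_ball_vol (real (n - 2))) \<and>
      LOp n / (K * unit_ball_vol (real (n - 2))) \<le> Q n / (K * unit_ball_vol (real (n - 2))) \<and>
      Q n / (K * unit_ball_vol (real (n - 2))) \<le> UPN D c n / (K * unit_ball_vol (real (n - 2)))"
    using LOp_le b
  proof eventually_elim
    case (elim n)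
    have vp: "K * unit_ball_vol (real (n - 2)) > 0" using K by simp
    show ?case using elim vp by (auto intro: divide_right_mono divide_pos_pos)
  qed
qed

end


lemma space_LM: "space (LM A) = PiE A (\<lambda>_. UNIV)" by (simp add: space_PiM)

lemma Rsp_eq: "Rsp m = space (LM {..<m})" by (simp add: Rsp_def space_LM)

lemma vol_eq: "vol m S = measure (LM {..<m}) S" by (simp add: vol_def lebm_def)

lemma enorm_eq: "enorm m x = gn {..<m} x"
  by (simp add: enorm_def gn_def gi_def power2_eq_square)

lemma einner_eq: "einner m x y = gi {..<m} x y"
  by (simp add: einner_def gi_def)

lemma vball_eq: "vball m = unit_ball_vol (real m)"
proof -
  have "oball0 m 1 = {f \<in> space (LM {..<m}). gn {..<m} f < 1}"
    by (simp add: oball0_def Rsp_eq enorm_eq)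
  then show ?thesis using measure_oball_s[of "{..<m}" 1] by (simp add: vball_def vol_eq)
qed

lemma Dpp_eq:
  assumes "i \<noteq> 0"
  shows "Dpp \<rho> k a n i u = cap {..<n-2} {dd \<rho> k a i - 3 / real n ..< dd \<rho> k a i - 2 / real n} (costh \<rho> k a n i) u"
  using assms unfolding Dpp_def cap_def Cpp_def oball0_def
  by (auto simp: Rsp_eq enorm_eq einner_eq)

lemma sum_shift2:
  fixes f :: "nat \<Rightarrow> real"
  shows "(\<Sum>j<n-2. f (j + 2)) = (\<Sum>j\<in>{..<n} - {0, 1}. f j)"
proof -
  have e: "{..<n} - {0, 1} = (\<lambda>j. j + 2) ` {..<n-2}"
  proof (rule set_eqI, rule iffI)
    fix x assume "x \<in> {..<n} - {0, 1}"
    then have "x = (x - 2) + 2" "x - 2 < n - 2" by auto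
    then show "x \<in> (\<lambda>j. j + 2) ` {..<n-2}" by (metis image_eqI lessThan_iff)
  qed auto
  show ?thesis unfolding e by (subst sum.reindex) (auto simp: inj_on_def)
qed

lemma DD_eq:
  fixes n :: nat
  assumes "i \<noteq> 0"
  defines "Rs \<equiv> {..<n} - {0, 1}"
  shows "DD \<rho> k a n i y = {x \<in> space (LM {..<n}). x 0 \<in> {0<..<1 / sqrt (real n)} \<and> x 1 \<in> {0<..<1 / sqrt (real n)}
     \<and> restrict x Rs \<in> cap Rs {dd \<rho> k a i - 3 / real n ..< dd \<rho> k a i - 2 / real n} (costh \<rho> k a n i) y}"
proof -
  have gnx: "enorm (n-2) (xpp n x) = gn Rs (restrict x Rs)" for x
    unfolding enorm_def gn_def gi_def xpp_def Rs_def
    using sum_shift2[of "\<lambda>j. x j * x j" n] by (simp add: power2_eq_square)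
  have gny: "enorm (n-2) (xpp n y) = gn Rs y"
    unfolding enorm_def gn_def gi_def xpp_def Rs_def
    using sum_shift2[of "\<lambda>j. y j * y j" n] by (simp add: power2_eq_square)
  have gix: "einner (n-2) (xpp n x) (xpp n y) = gi Rs (restrict x Rs) y" for x
    unfolding einner_def gi_def xpp_def Rs_def
    using sum_shift2[of "\<lambda>j. x j * y j" n] by simp
  have gr: "gn Rs (restrict y Rs) = gn Rs y" unfolding gn_def gi_def by (intro arg_cong[where f=sqrt] sum.cong) auto
  have xs: "xpp n x \<in> Rsp (n-2)" for x by (simp add: xpp_def Rsp_def)
  have rs: "restrict x Rs \<in> space (LM Rs)" for x by (simp add: space_LM)
  show ?thesis
    unfolding DD_def Dpp_def Cpp_def oball0_def cap_def Dp_def xp_def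
    using assms(1) xs rs by (auto simp: gnx gny gix gr Rsp_eq)
qed

lemma measure_DD:
  fixes n :: nat
  assumes "i \<noteq> 0" "n \<ge> 2"
  defines "Rs \<equiv> {..<n} - {0, 1}"
  shows "vol n (DD \<rho> k a n i y) = (1 / real n) * measure (LM Rs) (cap Rs {dd \<rho> k a i - 3 / real n ..< dd \<rho> k a i - 2 / real n} (costh \<rho> k a n i) y)"
proof -
  let ?C = "cap Rs {dd \<rho> k a i - 3 / real n ..< dd \<rho> k a i - 2 / real n} (costh \<rho> k a n i) y"
  have A: "finite {..<n}" "(0::nat) \<in> {..<n}" "(1::nat) \<in> {..<n}" "(0::nat) \<noteq> 1" using assms by auto
  have Cm: "?C \<in> sets (LM ({..<n} - {0, 1}))" unfolding Rs_def by (intro cap_sets) auto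
  have "emeasure (LM {..<n}) (DD \<rho> k a n i y) = ennreal (1 / sqrt (real n)) * (ennreal (1 / sqrt (real n)) * emeasure (LM Rs) ?C)"
    unfolding DD_eq[OF assms(1)] Rs_def
    by (subst emeasure_prod2[OF A]) (use Cm in \<open>auto simp: Rs_def\<close>)
  then show ?thesis unfolding vol_eq measure_def
    by (simp add: ennreal_mult'[symmetric] enn2real_mult real_sqrt_mult[symmetric] flip: real_sqrt_mult)
qed


context asy
begin

lemma bounds_ev:
  "\<forall>\<^sub>F n in sequentially. \<forall>(A::nat set) j0 j1. finite A \<longrightarrow> card A = n - 2 \<longrightarrow> j0 \<in> A \<longrightarrow> j1 \<in> A \<longrightarrow> j0 \<noteq> j1 \<longrightarrow>
     LON D c n \<le> measure (LM A) (cap A {R1N D n..<R2N D n} (cN c n) (ev A j0)) \<and>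
     measure (LM A) (cap A {R1N D n..<R2N D n} (cN c n) (ev A j0)) \<le> UPN D c n"
proof -
  have e1: "\<forall>\<^sub>F n in sequentially. R1N D n > 0" using order_tendstoD(1)[OF lim_R1N, of 0] D by simp
  have e2: "\<forall>\<^sub>F n in sequentially. XN D c n > 0" using order_tendstoD(1)[OF lim_XN, of 0] beta_pos by simp
  show ?thesis using e1 e2 ev_b
  proof eventually_elim
    case (elim n)
    have n0: "real n > 0" using elim by simp
    have cc: "0 \<le> cN c n" unfolding cN_def using c by simp
    have R12: "R1N D n < R2N D n" unfolding R1N_def R2N_def using n0 by (simp add: divide_strict_right_mono)
    have R2p: "R2N D n > 0" using R12 elim by linarith
    have X: "0 < (R2N D n)\<^sup>2 - (cN c n)\<^sup>2 * (R1N D n)\<^sup>2" using elim(2) unfolding XN_def by simp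
    have hp: "0 < hN n" unfolding hN_def using n0 by simp
    have alp: "0 \<le> alN D c n" unfolding alN_def using cc R2p by simp
    have b1p: "(R1N D n)\<^sup>2 - (alN D c n)\<^sup>2 > 0" using elim(3) unfolding b1N_def by simp
    have b2p: "(R2N D n)\<^sup>2 - (alN D c n + hN n)\<^sup>2 - (hN n)\<^sup>2 - hN n > 0" using elim(3) unfolding b2N_def
      by (metis order.strict_trans real_sqrt_gt_0_iff)
    have c1: "(R1N D n)\<^sup>2 \<le> (alN D c n)\<^sup>2 + (b1N D c n)\<^sup>2" using b1p unfolding b1N_def by simp
    have c2: "(alN D c n + hN n)\<^sup>2 + (hN n)\<^sup>2 + (b2N D c n)\<^sup>2 < (R2N D n)\<^sup>2" using b2p hp unfolding b2N_def by simp
    have c3: "cN c n * R2N D n \<le> alN D c n" unfolding alN_def by simp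
    show ?case
    proof (intro allI impI conjI)
      fix A :: "nat set" and j0 j1 :: nat assume A: "finite A" "card A = n - 2" "j0 \<in> A" "j1 \<in> A" "j0 \<noteq> j1"
      have cA: "card A - 2 = n - 4" using A(2) by simp
      show "LON D c n \<le> measure (LM A) (cap A {R1N D n..<R2N D n} (cN c n) (ev A j0))"
        using cap_lower[OF A(1,3,4,5) cc hp alp _ _ c1 c2 c3 R2p] elim(3) unfolding LON_def cA by auto
      show "measure (LM A) (cap A {R1N D n..<R2N D n} (cN c n) (ev A j0)) \<le> UPN D c n"
        using cap_upper[OF A(1,3,4,5) cc less_imp_le[OF elim(1)] R12 X] unfolding UPN_def XN_def cA by simp
    qed
  qed
qed

end

lemma rr_pos: "\<rho> > 1 \<Longrightarrow> rr \<rho> k i > 0" by (simp add: rr_def)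

lemma dd_ge:
  assumes r: "\<rho> > 1" and a: "\<forall>j\<in>{2..k+1}. 0 < a j \<and> a j < 1"
  shows "1 \<le> j \<Longrightarrow> j \<le> k + 1 \<Longrightarrow> dd \<rho> k a j \<ge> 1 + \<rho>"
proof (induction j)
  case 0 then show ?case by simp
next
  case (Suc j)
  show ?case
  proof (cases j)
    case 0 then show ?thesis by simp
  next
    case (Suc j')
    let ?p = "dd \<rho> k a (Suc j')"
    have p: "?p \<ge> 1 + \<rho>" using Suc.IH Suc.prems Suc by simp
    have ap: "a (Suc (Suc j')) \<ge> 0" using a[rule_format, of "Suc (Suc j')"] Suc.prems Suc by auto
    have "0 \<le> 2 * rr \<rho> k (Suc (Suc j')) * a (Suc (Suc j')) * ?p"
      using rr_pos[OF r, of k "Suc (Suc j')"] ap p r by (intro mult_nonneg_nonneg) auto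
    then have "?p\<^sup>2 \<le> ?p\<^sup>2 + 2 * rr \<rho> k (Suc (Suc j')) * a (Suc (Suc j')) * ?p + (rr \<rho> k (Suc (Suc j')))\<^sup>2"
      by simp
    then have "sqrt (?p\<^sup>2) \<le> dd \<rho> k a (Suc (Suc j'))" by (simp add: Let_def del: real_sqrt_abs)
    then show ?thesis using p r Suc by simp
  qed
qed

lemma dd_rec:
  assumes r: "\<rho> > 1" and a: "\<forall>j\<in>{2..k+1}. 0 < a j \<and> a j < 1" and i: "2 \<le> i" "i \<le> k + 1"
  shows "(dd \<rho> k a i)\<^sup>2 = (dd \<rho> k a (i - 1))\<^sup>2 + 2 * rr \<rho> k i * a i * dd \<rho> k a (i - 1) + (rr \<rho> k i)\<^sup>2"
proof -
  obtain j where j: "i = Suc (Suc j)" using i by (metis add_2_eq_Suc le_Suc_ex)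
  have p: "dd \<rho> k a (Suc j) \<ge> 0" using dd_ge[OF r a, of "Suc j"] i j r by simp
  have "0 \<le> 2 * rr \<rho> k i * a i * dd \<rho> k a (Suc j)"
    using rr_pos[OF r, of k i] a[rule_format, of i] i p by (intro mult_nonneg_nonneg) auto
  then show ?thesis unfolding j by (simp add: Let_def)
qed


theorem lemma2p13:
  fixes \<rho> \<kappa> :: real and k i :: nat and a :: "nat \<Rightarrow> real"
    and y :: "nat \<Rightarrow> nat \<Rightarrow> real"
  assumes "\<rho> > 1" and "k \<ge> 1"
    and "kappa_c \<rho> k < \<kappa>" and "\<kappa> < 1"
    and "\<forall>j\<in>{2..k+1}. 0 < a j \<and> a j < 1"
    and "1 < \<kappa> ^ (k + 1) * (1 + \<rho>)\<^sup>2 / (4 * \<rho>) * sqrt (\<Prod>j\<in>{2..k+1}. 1 - (a j)\<^sup>2)"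
    and "\<kappa> ^ (k + 1) * (1 + \<rho>)\<^sup>2 / (4 * \<rho>) * sqrt (\<Prod>j\<in>{2..k+1}. 1 - (a j)\<^sup>2)
           < \<kappa> * dd \<rho> k a (k + 1) / (2 * \<rho>)"
    and "i \<in> {2..k+1}"
    and "\<forall>\<^sub>F n in sequentially. y n \<in> CC \<rho> k a n (i - 1)"
  shows "(\<forall>\<^sub>F n in sequentially. \<forall>y1\<in>CC \<rho> k a n (i - 1). \<forall>y2\<in>CC \<rho> k a n (i - 1).
            vol (n - 2) (Dpp \<rho> k a n i (xpp n y1)) = vol (n - 2) (Dpp \<rho> k a n i (xpp n y2))
          \<and> vol n (DD \<rho> k a n i y1) = vol n (DD \<rho> k a n i y2))
    \<and> ((\<lambda>n. ln (vol (n - 2) (Dpp \<rho> k a n i (xpp n (y n))) / vball (n - 2)) / real n)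
          \<longlonglongrightarrow> ln (rr \<rho> k i * sqrt (1 - (a i)\<^sup>2)))
    \<and> ((\<lambda>n. ln (vol n (DD \<rho> k a n i (y n)) / vball n) / real n)
          \<longlonglongrightarrow> ln (rr \<rho> k i * sqrt (1 - (a i)\<^sup>2)))"
proof -
  have r1: "\<rho> > 1" and aa: "\<forall>j\<in>{2..k+1}. 0 < a j \<and> a j < 1" using assms by auto
  have i: "2 \<le> i" "i \<le> k + 1" using assms(8) by auto
  define D where "D = dd \<rho> k a i"
  define Dm where "Dm = dd \<rho> k a (i - 1)"
  define r where "r = rr \<rho> k i"
  define ai where "ai = a i"
  define c where "c = (Dm + ai * r) / D"
  have Dp: "D > 0" using dd_ge[OF r1 aa, of i] i r1 unfolding D_def by simp
  have i1: "1 \<le> i - 1" "i - 1 \<le> k + 1" using i by arith+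
  have Dmp: "Dm > 0" using dd_ge[OF r1 aa i1] r1 unfolding Dm_def by simp
  have rp: "r > 0" unfolding r_def using rr_pos[OF r1] .
  have ai: "0 < ai" "ai < 1" using aa i unfolding ai_def by auto
  have rec: "D\<^sup>2 = Dm\<^sup>2 + 2 * r * ai * Dm + r\<^sup>2"
    using dd_rec[OF r1 aa i] unfolding D_def Dm_def r_def ai_def by simp
  have diff: "D\<^sup>2 - (Dm + ai * r)\<^sup>2 = r\<^sup>2 * (1 - ai\<^sup>2)"
    using rec by (simp add: algebra_simps power2_eq_square)
  have dpos: "r\<^sup>2 * (1 - ai\<^sup>2) > 0" using rp ai by (simp add: abs_square_less_1)
  have lt: "Dm + ai * r < D"
  proof -
    have "(Dm + ai * r)\<^sup>2 < D\<^sup>2" using diff dpos by linarith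
    then show ?thesis using Dp by (meson power2_less_imp_less less_imp_le)
  qed
  have cpos: "0 < c" unfolding c_def using Dmp ai rp Dp by (intro divide_pos_pos add_pos_pos mult_pos_pos) auto
  have clt: "c < 1" unfolding c_def using lt Dp by simp
  interpret asy D c using Dp cpos clt by unfold_locales auto
  have cD: "c * D = Dm + ai * r" unfolding c_def using Dp by simp
  have beta: "\<beta> = rr \<rho> k i * sqrt (1 - (a i)\<^sup>2)"
    unfolding \<beta>_def cD diff using rp by (simp add: real_sqrt_mult r_def ai_def)
  have costh: "costh \<rho> k a n i = cN c n" for n
    unfolding costh_def cN_def c_def D_def Dm_def r_def ai_def by (simp add: mult.commute)
  have Seq: "{dd \<rho> k a i - 3 / real n ..< dd \<rho> k a i - 2 / real n} = {R1N D n..<R2N D n}" for n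
    unfolding R1N_def R2N_def D_def by simp
  define W1 where "W1 n = measure (LM {..<n-2}) (cap {..<n-2} {R1N D n..<R2N D n} (cN c n) (ev {..<n-2} 0))" for n
  define W2 where "W2 n = measure (LM ({..<n} - {0, 1})) (cap ({..<n} - {0, 1}) {R1N D n..<R2N D n} (cN c n) (ev ({..<n} - {0, 1}) 2))" for n
  have EV: "\<forall>\<^sub>F n in sequentially. n \<ge> 6 \<and> Dm - 3 / real n > 0"
  proof -
    have "((\<lambda>n. Dm - 3 * (1 / real n)) \<longlongrightarrow> Dm - 3 * 0) sequentially"
      by (intro tendsto_intros lim_inverse_n')
    then have "\<forall>\<^sub>F n in sequentially. Dm - 3 * (1 / real n) > 0" using Dmp by (intro order_tendstoD(1)) auto
    then show ?thesis using eventually_ge_at_top[of 6] by eventually_elim auto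
  qed
  have claimA: "\<forall>\<^sub>F n in sequentially. \<forall>y'\<in>CC \<rho> k a n (i - 1).
      vol (n - 2) (Dpp \<rho> k a n i (xpp n y')) = W1 n \<and> vol n (DD \<rho> k a n i y') = 1 / real n * W2 n"
    using EV
  proof eventually_elim
    case (elim n)
    show ?case
    proof
      fix y' assume y': "y' \<in> CC \<rho> k a n (i - 1)"
      have i0: "i - 1 \<noteq> 0" "i \<noteq> 0" using i by auto
      have "xpp n y' \<in> Cpp \<rho> k a n (i - 1)" using y' by (simp add: CC_def)
      then have "\<not> enorm (n - 2) (xpp n y') < Dm - 3 / real n"
        using i0 unfolding Cpp_def oball0_def Dm_def by auto
      then have g1: "gn {..<n-2} (xpp n y') > 0" using elim by (simp add: enorm_eq)
      have gnR: "gn ({..<n} - {0, 1}) y' = enorm (n - 2) (xpp n y')"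
        unfolding enorm_def gn_def gi_def xpp_def
        using sum_shift2[of "\<lambda>j. y' j * y' j" n] by (simp add: power2_eq_square)
      have g2: "gn ({..<n} - {0, 1}) y' > 0" using g1 gnR by (simp add: enorm_eq)
      have Sb: "{R1N D n..<R2N D n} \<in> sets borel" by simp
      have "vol (n - 2) (Dpp \<rho> k a n i (xpp n y')) = measure (LM {..<n-2}) (cap {..<n-2} {R1N D n..<R2N D n} (cN c n) (xpp n y'))"
        unfolding vol_eq Dpp_eq[OF i0(2)] Seq costh ..
      also have "\<dots> = W1 n" unfolding W1_def measure_def
        using cap_reduce[of "{..<n-2}" 0 "{R1N D n..<R2N D n}" "xpp n y'" "cN c n"] elim g1 by simp
      finally have A1: "vol (n - 2) (Dpp \<rho> k a n i (xpp n y')) = W1 n" .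
      have "vol n (DD \<rho> k a n i y') = 1 / real n * measure (LM ({..<n} - {0, 1})) (cap ({..<n} - {0, 1}) {R1N D n..<R2N D n} (cN c n) y')"
        using measure_DD[OF i0(2), of n \<rho> k a y'] elim unfolding Seq costh by simp
      also have "\<dots> = 1 / real n * W2 n" unfolding W2_def measure_def
        using cap_reduce[of "{..<n} - {0, 1}" 2 "{R1N D n..<R2N D n}" y' "cN c n"] elim g2 by simp
      finally show "vol (n - 2) (Dpp \<rho> k a n i (xpp n y')) = W1 n \<and> vol n (DD \<rho> k a n i y') = 1 / real n * W2 n"
        using A1 by simp
    qed
  qed
  have part1: "\<forall>\<^sub>F n in sequentially. \<forall>y1\<in>CC \<rho> k a n (i - 1). \<forall>y2\<in>CC \<rho> k a n (i - 1).
            vol (n - 2) (Dpp \<rho> k a n i (xpp n y1)) = vol (n - 2) (Dpp \<rho> k a n i (xpp n y2))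
          \<and> vol n (DD \<rho> k a n i y1) = vol n (DD \<rho> k a n i y2)"
    using claimA by eventually_elim auto
  have B: "\<forall>\<^sub>F n in sequentially. LON D c n \<le> W1 n \<and> W1 n \<le> UPN D c n \<and> LON D c n \<le> W2 n \<and> W2 n \<le> UPN D c n"
    using bounds_ev EV
  proof eventually_elim
    case (elim n)
    have c1: "card {..<n-2} = n - 2" by simp
    have c2: "card ({..<n} - {0, 1}) = n - 2" using elim by (simp add: card_Diff_subset)
    show ?case using elim(1)[rule_format, of "{..<n-2}" 0 1] elim(1)[rule_format, of "{..<n} - {0, 1}" 2 3] c1 c2 elim(2)
      unfolding W1_def W2_def by auto
  qed
  have part2: "((\<lambda>n. ln (vol (n - 2) (Dpp \<rho> k a n i (xpp n (y n))) / vball (n - 2)) / real n)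
          \<longlonglongrightarrow> ln (rr \<rho> k i * sqrt (1 - (a i)\<^sup>2)))"
  proof -
    have l: "((\<lambda>n. ln (W1 n / (1 * unit_ball_vol (real (n - 2)))) / real n) \<longlongrightarrow> ln \<beta>) sequentially"
      by (rule main_asym) (use B in \<open>auto elim: eventually_mono\<close>)
    have "\<forall>\<^sub>F n in sequentially. ln (W1 n / (1 * unit_ball_vol (real (n - 2)))) / real n
        = ln (vol (n - 2) (Dpp \<rho> k a n i (xpp n (y n))) / vball (n - 2)) / real n"
      using claimA assms(9) by eventually_elim (simp add: vball_eq)
    from tendsto_cong[OF this] l show ?thesis unfolding beta by simp
  qed
  have part3: "((\<lambda>n. ln (vol n (DD \<rho> k a n i (y n)) / vball n) / real n)
          \<longlonglongrightarrow> ln (rr \<rho> k i * sqrt (1 - (a i)\<^sup>2)))"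
  proof -
    have l: "((\<lambda>n. ln (W2 n / ((2 * pi) * unit_ball_vol (real (n - 2)))) / real n) \<longlongrightarrow> ln \<beta>) sequentially"
      by (rule main_asym) (use B in \<open>auto elim: eventually_mono\<close>)
    have "\<forall>\<^sub>F n in sequentially. ln (W2 n / ((2 * pi) * unit_ball_vol (real (n - 2)))) / real n
        = ln (vol n (DD \<rho> k a n i (y n)) / vball n) / real n"
      using claimA assms(9) EV
    proof eventually_elim
      case (elim n)
      have nn: "n - 2 + 2 = n" using elim(3) by (elim conjE) arith
      have vr: "unit_ball_vol (real (n - 2)) / unit_ball_vol (real n) = real n / (2 * pi)"
        using ubv_ratio[of "n - 2"] unfolding nn .
      have v0: "unit_ball_vol (real n) \<noteq> 0" using unit_ball_vol_pos[of "real n"] by linarith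
      have v2: "unit_ball_vol (real (n - 2)) \<noteq> 0" using unit_ball_vol_pos[of "real (n - 2)"] by linarith
      have npos: "real n > 0" using elim by simp
      have vn: "unit_ball_vol (real n) = unit_ball_vol (real (n - 2)) * (2 * pi) / real n"
        using vr v0 npos by (simp add: field_simps)
      have E: "1 / real n * W2 n / vball n = W2 n / ((2 * pi) * unit_ball_vol (real (n - 2)))"
        unfolding vball_eq vn using npos v2 by (simp add: field_simps)
      have Vy: "vol n (DD \<rho> k a n i (y n)) = 1 / real n * W2 n" using elim(1) elim(2) by blast
      have "vol n (DD \<rho> k a n i (y n)) / vball n = W2 n / ((2 * pi) * unit_ball_vol (real (n - 2)))"
        unfolding Vy by (rule E)
      then show ?case by (simp only:)
    qed
    from tendsto_cong[OF this] l show ?thesis unfolding beta by simp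
  qed
  show ?thesis using part1 part2 part3 by blast
qed


end
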